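(* Let $\Lambda$ be a set of pairwise compatible libraries, $L$ a library compatible with all of them and with $L\notin\Lambda$, and $I$ an implementation of $L$ that is well defined for $L$ using $\Lambda$. If $I$ is locally sound, then $I$ is a sound implementation of $L$ using $\Lambda$: for every concurrent program $\vec p$ whose method calls are all to methods of libraries in $\Lambda\uplus\{L\}$ and such that $\mathsf{loc}(I)\cap\mathsf{loc}(\vec p)=\emptyset$, we have $\mathsf{outcome}_\Lambda(\langle\!\langle\vec p\rangle\!\rangle_I)\subseteq\mathsf{outcome}_{\Lambda\uplus\{L\}}(\vec p)$.
   Context: Fix a set $\mathsf{Val}$ of values, a subset $\mathsf{Loc}\subseteq\mathsf{Val}$ of locations, a set $\mathsf{Method}$ of methods, a finite set of threads $\mathsf{Tid}=\{1,\dots,T\}$, and $\mathsf{EventId}=\mathbb N$. Programs. Sequential programs are given by the grammar $p::= v \mid m(v_1,\dots,v_k)\mid \mathtt{let}\ p\ \mathsf f\mid \mathtt{loop}\ p\mid \mathtt{break}_k\ v$, where $v,v_i\in\mathsf{Val}$, $m\in\mathsf{Method}$, $\mathsf f:\mathsf{Val}\to\mathsf{SeqProg}$, and $k\in\mathbb N^{+}$. A concurrent program is a tuple $\vec p=\langle p_1,\dots,p_T\rangle$ of sequential programs, $p_t$ run by thread $t$. Events and plain executions. Labels are $\mathsf{Lab}=\mathsf{Method}\times\mathsf{Val}^*\times\mathsf{Val}$ (method, inputs, output); events are $\mathsf{Event}=\mathsf{Tid}\times\mathsf{EventId}\times\mathsf{Lab}$; for $e=\langle t,\iota,l\rangle$,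 $\mathrm{thread}(e)=t$. A plain execution is a pair $\langle E,po\rangle$ with $E\subseteq\mathsf{Event}$, $po\subseteq E\times E$, $po=\bigcup_{t}po|_t$, where $po|_t$ (restriction to events of thread $t$) is a strict total order on the events of $t$. Write $\emptyset_G=\langle\emptyset,\emptyset\rangle$ and $\{e\}_G=\langle\{e\},\emptyset\rangle$. For $G_i=\langle E_i,po_i\rangle$ with $E_1\cap E_2=\emptyset$: $G_1;G_2=\langle E_1\cup E_2,\,po_1\cup po_2\cup(E_1\times E_2)\rangle$ and $G_1\parallel G_2=\langle E_1\cup E_2,\,po_1\cup po_2\rangle$. Plain semantics. $[\![p]\!]_t$ is a set of pairs $\langle\langle v,k\rangle,G\rangle$ (output value $v$, break number $k\in\mathbb N$, plain execution $G$): $[\![v]\!]_t=\{\langle\langle v,0\rangle,\emptyset_G\rangle\}$; $[\![\mathtt{break}_k\,v]\!]_t=\{\langle\langle v,k\rangle,\emptyset_G\rangle\}$; $[\![m(\vec v)]\!]_t=\{\langle\langle v',0\rangle,\{\langle t,\iota,\langle m,\vec v,v'\rangle\rangle\}_G\rangle : v'\in\mathsf{Val},\iota\in\mathsf{EventId}\}$; $[\![\mathtt{let}\ p\ \mathsf f]\!]_t=\{\langle r,G_1;G_2\rangle:\langle\langle v,0\rangle,G_1\rangle\in[\![p]\!]_t,\ \langle r,G_2\rangle\in[\![\mathsf f\,v]\!]_t\}\cup\{\langle\langle v,k\rangle,G_1\rangle\in[\![p]\!]_t: k\neq0\}$; $[\![\mathtt{loop}\ p]\!]_t=\bigcup_{j\in\mathbb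 N}\{\langle\langle v,k\rangle,G_0;\dots;G_j\rangle : (\forall i<j.\ \langle\langle\_,0\rangle,G_i\rangle\in[\![p]\!]_t)\wedge\langle\langle v,k+1\rangle,G_j\rangle\in[\![p]\!]_t\}$ (compositions taken only when event sets are disjoint). For concurrent programs, $[\![\langle p_1,\dots,p_T\rangle]\!]=\{\langle\langle v_1,\dots,v_T\rangle,\parallel_{t}G_t\rangle:\forall t.\ \langle\langle v_t,0\rangle,G_t\rangle\in[\![p_t]\!]_t\}$. Stamps and executions. Fix a set $\mathsf{Stamp}$ and a relation $to\subseteq\mathsf{Stamp}\times\mathsf{Stamp}$. An execution is $\langle E,po,stmp,so,hb\rangle$ where $\langle E,po\rangle$ is a plain execution, $stmp$ maps each event of $E$ to a nonempty set of stamps, inducing subevents $\mathsf{SEvent}=\{\langle e,a\rangle: e\in E, a\in stmp(e)\}$, and $so,hb\subseteq\mathsf{SEvent}\times\mathsf{SEvent}$. Its preserved program order is $ppo=\{\langle\langle e_1,a_1\rangle,\langle e_2,a_2\rangle\rangle:\langle e_1,e_2\rangle\in po,\ a_i\in stmp(e_i),\ \langle a_1,a_2\rangle\in to\}$. Libraries. A library is a triple $L=\langle M,\mathsf{loc},\mathcal C\rangle$: $M\subseteq\mathsf{Method}$; $\mathsf{loc}$ maps each event whose method lies in $M$ to a set of locations; $\mathcal C$ is a set of executions satisfying (monotonicity) if $\langle E,po,stmp,so,hb\rangle\in\mathcal C$ and $(ppo\cup so)^+\subseteq hb'\subseteq hb$ then $\langle E,po,stmp,so,hb'\rangle\in\mathcal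 C$, and (decomposability) if $\langle E_1\uplus E_2,po,stmp,so,hb\rangle\in\mathcal C$ and $\mathsf{loc}(E_1)\cap\mathsf{loc}(E_2)=\emptyset$ then its restriction to $E_1$ (restricting $po$, $stmp$, and $so,hb$ to subevents of events in $E_1$) is in $\mathcal C$. For a set $E$ of events, $E|_L$ is the set of events of $E$ whose method is in $L.M$; for an execution, restriction $|_L$ restricts $E$, $po$, $stmp$, and $so,hb$ to (subevents of) events in $E|_L$. For an event $e$, $\mathsf{loc}(e)$ is given by the library containing its method, and $\mathsf{loc}(E)=\bigcup_{e\in E}\mathsf{loc}(e)$. Two libraries are compatible if their method sets are disjoint. Consistency and outcomes. For a set $\Lambda$ of pairwise compatible libraries, an execution $\langle E,po,stmp,so,hb\rangle$ is $\Lambda$-consistent if: $(ppo\cup so)^+\subseteq hb$ and $hb$ is a strict partial order; $E=\bigcup_{L\in\Lambda}E|_L$ and $so=\bigcup_{L\in\Lambda}so|_L$; and for every $L\in\Lambda$ the restriction to $L$ belongs to $L.\mathcal C$. Then $\mathsf{outcome}_\Lambda(\vec p)=\{\vec v:\exists\,\Lambda\text{-consistent }\langle E,po,stmp,so,hb\rangle.\ \langle\vec v,\langle E,po\rangle\rangle\in[\![\vec p]\!]\}$, and $\mathsf{loc}(\vec p)=\bigcup_{\langle\_,\langle E,\_\rangle\rangle\in[\![\vec p]\!]}\mathsf{loc}(E)$. Implementations. An implementation of $L$ is a function $I:\mathsf{Tid}\times L.M\times\mathsf{Val}^*\to\mathsf{SeqProg}$. It is well defined for $L$ using $\Lambda$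 if $L\notin\Lambda$ and for all $t,m,\vec v$: $I(t,m,\vec v)$ only calls methods of libraries in $\Lambda$; no element of $[\![I(t,m,\vec v)]\!]_t$ has the form $\langle\langle\_,k+1\rangle,\_\rangle$; and if $\langle\langle v,0\rangle,\langle E,po\rangle\rangle\in[\![I(t,m,\vec v)]\!]_t$ then $E\neq\emptyset$. $\mathsf{loc}(I)=\bigcup_{t,m,\vec v}\bigcup_{\langle\_,\langle E,\_\rangle\rangle\in[\![I(t,m,\vec v)]\!]_t}\mathsf{loc}(E)$. The translation $\langle\!\langle\cdot\rangle\!\rangle$ replaces, in thread $t$, each call $m(\vec v)$ with $m\in L.M$ by $I(t,m,\vec v)$ and leaves everything else unchanged ($\langle\!\langle v\rangle\!\rangle_t=v$, $\langle\!\langle\mathtt{break}_k v\rangle\!\rangle_t=\mathtt{break}_k v$, $\langle\!\langle\mathtt{loop}\,p\rangle\!\rangle_t=\mathtt{loop}\,\langle\!\langle p\rangle\!\rangle_t$, $\langle\!\langle\mathtt{let}\,p\,\mathsf f\rangle\!\rangle_t=\mathtt{let}\,\langle\!\langle p\rangle\!\rangle_t\,(\lambda v.\langle\!\langle\mathsf f\,v\rangle\!\rangle_t)$), and $\langle\!\langle\langle p_1,\dots,p_T\rangle\rangle\!\rangle_I=\langle\langle\!\langle p_1\rangle\!\rangle_1,\dots,\langle\!\langle p_T\rangle\!\rangle_T\rangle$. Abstraction. For plain executions $G=\langle E,po\rangle$ (using methods of $\Lambda$) and $G'=\langle E',po'\rangle$ (using methods of $L$), a surjective $f:E\to E'$ abstracts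 $G$ to $G'$ if: $E|_L=\emptyset$ and $E'|_L=E'$; $f(po)\subseteq(po')^*$ (where $f(r)=\{\langle f(x),f(y)\rangle:\langle x,y\rangle\in r\}$ and $^*$ is reflexive-transitive closure) and for all $e_1,e_2$, $\langle f(e_1),f(e_2)\rangle\in po'$ implies $\langle e_1,e_2\rangle\in po$; and for every $e'=\langle t,\iota,\langle m,\vec v,v'\rangle\rangle\in E'$, $\langle\langle v',0\rangle,G|_{f^{-1}(e')}\rangle\in[\![I(t,m,\vec v)]\!]_t$, where $G|_A=\langle A,po\cap(A\times A)\rangle$. Local soundness. A well-defined implementation $I$ of $L$ using $\Lambda$ is locally sound if, whenever $\mathcal G=\langle E,po,stmp,so,hb\rangle$ is $\Lambda$-consistent and $f$ abstracts $\langle E,po\rangle$ to $\langle E',po'\rangle$, there exist $stmp'$ (on $E'$), $so'$, and a function $g$ from the subevents of $\langle E',po',stmp'\rangle$ to $\mathcal G.\mathsf{SEvent}$ such that: (i) if $g(\langle e',a'\rangle)=\langle e,a\rangle$ then $f(e)=e'$, and for every stamp $a_0$ with $\langle a_0,a'\rangle\in to$ there is $\langle e_1,a_1\rangle\in\mathcal G.\mathsf{SEvent}$ with $f(e_1)=e'$, $\langle a_0,a_1\rangle\in to$ and $\langle\langle e_1,a_1\rangle,\langle e,a\rangle\rangle\in hb^*$, and for every stamp $a_0$ with $\langle a',a_0\rangle\in to$ there is $\langle e_2,a_2\rangle\in\mathcal G.\mathsf{SEvent}$ with $f(e_2)=e'$, $\langle a_2,a_0\rangle\in to$ and $\langle\langle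 e,a\rangle,\langle e_2,a_2\rangle\rangle\in hb^*$; (ii) $g(so')\subseteq hb$; (iii) for every transitive $hb'$ with $(ppo'\cup so')^+\subseteq hb'$ and $g(hb')\subseteq hb$, we have $\langle E',po',stmp',so',hb'\rangle\in L.\mathcal C$, where $ppo'$ is the preserved program order of $\langle E',po',stmp'\rangle$. *)

theory Defs
  imports Main
begin

text \<open>Values 'v, methods 'm. Break k v is only meaningful for k >= 1 (see seqprog).\<close>
datatype ('v, 'm) prog =
    PVal 'v
  | Call 'm "'v list"
  | Let "('v, 'm) prog" "'v \<Rightarrow> ('v, 'm) prog"
  | Loop "('v, 'm) prog"
  | Break nat 'v

primrec seqprog :: "('v, 'm) prog \<Rightarrow> bool" where
  "seqprog (PVal v) = True"
| "seqprog (Call m vs) = True"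
| "seqprog (Let p f) = (seqprog p \<and> (\<forall>v. seqprog (f v)))"
| "seqprog (Loop p) = seqprog p"
| "seqprog (Break k v) = (k \<ge> 1)"

primrec calls_in :: "'m set \<Rightarrow> ('v, 'm) prog \<Rightarrow> bool" where
  "calls_in S (PVal v) = True"
| "calls_in S (Call m vs) = (m \<in> S)"
| "calls_in S (Let p f) = (calls_in S p \<and> (\<forall>v. calls_in S (f v)))"
| "calls_in S (Loop p) = calls_in S p"
| "calls_in S (Break k v) = True"

type_synonym ('v, 'm) lab = "'m \<times> 'v list \<times> 'v"
type_synonym ('v, 'm) event = "nat \<times> nat \<times> ('v, 'm) lab"
type_synonym ('v, 'm) pexec = "('v, 'm) event set \<times> (('v, 'm) event \<times> ('v, 'm) event) set"

definition thread :: "('v, 'm) event \<Rightarrow> nat" where "thread e = fst e"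
definition meth :: "('v, 'm) event \<Rightarrow> 'm" where "meth e = fst (snd (snd e))"
definition args :: "('v, 'm) event \<Rightarrow> 'v list" where "args e = fst (snd (snd (snd e)))"
definition outv :: "('v, 'm) event \<Rightarrow> 'v" where "outv e = snd (snd (snd (snd e)))"

definition plain_exec :: "nat \<Rightarrow> ('v, 'm) pexec \<Rightarrow> bool" where
  "plain_exec T G \<longleftrightarrow>
     (\<forall>e\<in>fst G. thread e \<in> {1..T}) \<and>
     snd G \<subseteq> fst G \<times> fst G \<and>
     (\<forall>(a, b)\<in>snd G. thread a = thread b) \<and>
     (\<forall>t. let Et = {e\<in>fst G. thread e = t}; r = snd G \<inter> (Et \<times> Et)
          in trans r \<and> irrefl r \<and> total_on Et r)"

definition empty_G :: "('v, 'm) pexec" where "empty_G = ({}, {})"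

definition seqc :: "('v, 'm) pexec \<Rightarrow> ('v, 'm) pexec \<Rightarrow> ('v, 'm) pexec" where
  "seqc G1 G2 = (fst G1 \<union> fst G2, snd G1 \<union> snd G2 \<union> (fst G1 \<times> fst G2))"

definition seq_list :: "('v, 'm) pexec list \<Rightarrow> ('v, 'm) pexec" where
  "seq_list Gs = foldr seqc Gs empty_G"

primrec sem :: "nat \<Rightarrow> ('v, 'm) prog \<Rightarrow> (('v \<times> nat) \<times> ('v, 'm) pexec) set" where
  "sem t (PVal v) = {((v, 0), empty_G)}"
| "sem t (Break k v) = {((v, k), empty_G)}"
| "sem t (Call m vs) = {((v', 0), ({(t, \<iota>, (m, vs, v'))}, {})) | v' \<iota>. True}"
| "sem t (Let p f) =
     {(r, seqc G1 G2) | r G1 G2 v. ((v, 0), G1) \<in> sem t p \<and> (r, G2) \<in> sem t (f v)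
                                   \<and> fst G1 \<inter> fst G2 = {}}
     \<union> {x \<in> sem t p. snd (fst x) \<noteq> 0}"
| "sem t (Loop p) =
     {((v, k), seq_list Gs) | v k Gs j.
        length Gs = Suc j \<and>
        (\<forall>i<j. \<exists>u. ((u, 0), Gs ! i) \<in> sem t p) \<and>
        ((v, Suc k), Gs ! j) \<in> sem t p \<and>
        (\<forall>i<length Gs. \<forall>i'<length Gs. i \<noteq> i' \<longrightarrow> fst (Gs ! i) \<inter> fst (Gs ! i') = {})}"

text \<open>Concurrent programs: a list of length T; thread t (1 <= t <= T) runs ps ! (t - 1).\<close>
definition sem_conc :: "('v, 'm) prog list \<Rightarrow> ('v list \<times> ('v, 'm) pexec) set" where
  "sem_conc ps = {(vs, (\<Union>i<length ps. fst (Gs ! i), \<Union>i<length ps. snd (Gs ! i))) | vs Gs.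
      length vs = length ps \<and> length Gs = length ps \<and>
      (\<forall>i<length ps. ((vs ! i, 0), Gs ! i) \<in> sem (Suc i) (ps ! i))}"

record ('v, 'm, 's) execution =
  ev   :: "('v, 'm) event set"
  po   :: "(('v, 'm) event \<times> ('v, 'm) event) set"
  stmp :: "('v, 'm) event \<Rightarrow> 's set"
  so   :: "((('v, 'm) event \<times> 's) \<times> (('v, 'm) event \<times> 's)) set"
  hb   :: "((('v, 'm) event \<times> 's) \<times> (('v, 'm) event \<times> 's)) set"

definition SEv :: "('v, 'm, 's, 'z) execution_scheme \<Rightarrow> (('v, 'm) event \<times> 's) set" where
  "SEv X = {(e, a). e \<in> ev X \<and> a \<in> stmp X e}"

text \<open>stmp is a function on E only; represented canonically as {} outside E.\<close>
definition wf_exec :: "nat \<Rightarrow> ('v, 'm, 's) execution \<Rightarrow> bool" where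
  "wf_exec T X \<longleftrightarrow> plain_exec T (ev X, po X) \<and>
     (\<forall>e\<in>ev X. stmp X e \<noteq> {}) \<and> (\<forall>e. e \<notin> ev X \<longrightarrow> stmp X e = {}) \<and>
     so X \<subseteq> SEv X \<times> SEv X \<and> hb X \<subseteq> SEv X \<times> SEv X"

definition ppo :: "('s \<times> 's) set \<Rightarrow> ('v, 'm, 's, 'z) execution_scheme
                   \<Rightarrow> ((('v, 'm) event \<times> 's) \<times> (('v, 'm) event \<times> 's)) set" where
  "ppo to X = {((e1, a1), (e2, a2)) | e1 a1 e2 a2.
      (e1, e2) \<in> po X \<and> a1 \<in> stmp X e1 \<and> a2 \<in> stmp X e2 \<and> (a1, a2) \<in> to}"

definition restrict_exec :: "('v, 'm, 's) execution \<Rightarrow> ('v, 'm) event set \<Rightarrow> ('v, 'm, 's) execution" where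
  "restrict_exec X A =
     \<lparr> ev = ev X \<inter> A, po = po X \<inter> (A \<times> A),
       stmp = (\<lambda>e. if e \<in> A then stmp X e else {}),
       so = so X \<inter> {(x, y). fst x \<in> A \<and> fst y \<in> A},
       hb = hb X \<inter> {(x, y). fst x \<in> A \<and> fst y \<in> A} \<rparr>"

record ('v, 'm, 's) library =
  lM   :: "'m set"
  lloc :: "('v, 'm) event \<Rightarrow> 'v set"
  lC   :: "('v, 'm, 's) execution set"

definition lib_locs :: "('v, 'm, 's) library \<Rightarrow> ('v, 'm) event set \<Rightarrow> 'v set" where
  "lib_locs Lb E = (\<Union>e\<in>E. lloc Lb e)"

definition is_library :: "nat \<Rightarrow> ('s \<times> 's) set \<Rightarrow> ('v, 'm, 's) library \<Rightarrow> bool" where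
  "is_library T to Lb \<longleftrightarrow>
     (\<forall>X\<in>lC Lb. wf_exec T X) \<and>
     (\<forall>X\<in>lC Lb. \<forall>hb'. (ppo to X \<union> so X)\<^sup>+ \<subseteq> hb' \<and> hb' \<subseteq> hb X \<longrightarrow> X\<lparr>hb := hb'\<rparr> \<in> lC Lb) \<and>
     (\<forall>X\<in>lC Lb. \<forall>E1 E2. ev X = E1 \<union> E2 \<and> E1 \<inter> E2 = {} \<and> lib_locs Lb E1 \<inter> lib_locs Lb E2 = {}
          \<longrightarrow> restrict_exec X E1 \<in> lC Lb)"

definition compatible :: "('v, 'm, 's) library \<Rightarrow> ('v, 'm, 's) library \<Rightarrow> bool" where
  "compatible L1 L2 \<longleftrightarrow> lM L1 \<inter> lM L2 = {}"

definition pairwise_compatible :: "('v, 'm, 's) library set \<Rightarrow> bool" where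
  "pairwise_compatible \<Lambda> \<longleftrightarrow> (\<forall>L1\<in>\<Lambda>. \<forall>L2\<in>\<Lambda>. L1 \<noteq> L2 \<longrightarrow> compatible L1 L2)"

definition evs_of :: "('v, 'm, 's) library \<Rightarrow> ('v, 'm) event set \<Rightarrow> ('v, 'm) event set" where
  "evs_of Lb E = {e\<in>E. meth e \<in> lM Lb}"

definition restrict_lib :: "('v, 'm, 's) execution \<Rightarrow> ('v, 'm, 's) library \<Rightarrow> ('v, 'm, 's) execution" where
  "restrict_lib X Lb = restrict_exec X (evs_of Lb (ev X))"

definition loc_ev :: "('v, 'm, 's) library set \<Rightarrow> ('v, 'm) event \<Rightarrow> 'v set" where
  "loc_ev \<Lambda> e = \<Union>{lloc Lb e | Lb. Lb \<in> \<Lambda> \<and> meth e \<in> lM Lb}"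

definition locs :: "('v, 'm, 's) library set \<Rightarrow> ('v, 'm) event set \<Rightarrow> 'v set" where
  "locs \<Lambda> E = (\<Union>e\<in>E. loc_ev \<Lambda> e)"

definition consistent :: "nat \<Rightarrow> ('s \<times> 's) set \<Rightarrow> ('v, 'm, 's) library set \<Rightarrow> ('v, 'm, 's) execution \<Rightarrow> bool" where
  "consistent T to \<Lambda> X \<longleftrightarrow> wf_exec T X \<and>
     (ppo to X \<union> so X)\<^sup>+ \<subseteq> hb X \<and> irrefl (hb X) \<and> trans (hb X) \<and>
     ev X = (\<Union>Lb\<in>\<Lambda>. evs_of Lb (ev X)) \<and>
     so X = (\<Union>Lb\<in>\<Lambda>. so (restrict_lib X Lb)) \<and>
     (\<forall>Lb\<in>\<Lambda>. restrict_lib X Lb \<in> lC Lb)"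

definition outcome :: "nat \<Rightarrow> ('s \<times> 's) set \<Rightarrow> ('v, 'm, 's) library set \<Rightarrow> ('v, 'm) prog list \<Rightarrow> 'v list set" where
  "outcome T to \<Lambda> ps = {vs. \<exists>X. consistent T to \<Lambda> X \<and> (vs, (ev X, po X)) \<in> sem_conc ps}"

definition loc_prog :: "('v, 'm, 's) library set \<Rightarrow> ('v, 'm) prog list \<Rightarrow> 'v set" where
  "loc_prog \<Lambda> ps = \<Union>{locs \<Lambda> (fst G) | vs G. (vs, G) \<in> sem_conc ps}"

type_synonym ('v, 'm) impl = "nat \<Rightarrow> 'm \<Rightarrow> 'v list \<Rightarrow> ('v, 'm) prog"

definition well_defined :: "nat \<Rightarrow> ('v, 'm) impl \<Rightarrow> ('v, 'm, 's) library \<Rightarrow> ('v, 'm, 's) library set \<Rightarrow> bool" where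
  "well_defined T I L \<Lambda> \<longleftrightarrow> L \<notin> \<Lambda> \<and>
     (\<forall>t\<in>{1..T}. \<forall>m\<in>lM L. \<forall>vs.
        seqprog (I t m vs) \<and>
        calls_in (\<Union>(lM ` \<Lambda>)) (I t m vs) \<and>
        (\<forall>v k G. ((v, Suc k), G) \<notin> sem t (I t m vs)) \<and>
        (\<forall>v G. ((v, 0), G) \<in> sem t (I t m vs) \<longrightarrow> fst G \<noteq> {}))"

definition loc_impl :: "nat \<Rightarrow> ('v, 'm, 's) library set \<Rightarrow> ('v, 'm) impl \<Rightarrow> ('v, 'm, 's) library \<Rightarrow> 'v set" where
  "loc_impl T \<Lambda> I L = \<Union>{locs \<Lambda> (fst G) | t m vs r G.
      t \<in> {1..T} \<and> m \<in> lM L \<and> (r, G) \<in> sem t (I t m vs)}"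

primrec transl :: "('v, 'm) impl \<Rightarrow> ('v, 'm, 's) library \<Rightarrow> nat \<Rightarrow> ('v, 'm) prog \<Rightarrow> ('v, 'm) prog" where
  "transl I L t (PVal v) = PVal v"
| "transl I L t (Call m vs) = (if m \<in> lM L then I t m vs else Call m vs)"
| "transl I L t (Let p f) = Let (transl I L t p) (\<lambda>v. transl I L t (f v))"
| "transl I L t (Loop p) = Loop (transl I L t p)"
| "transl I L t (Break k v) = Break k v"

definition transl_conc :: "('v, 'm) impl \<Rightarrow> ('v, 'm, 's) library \<Rightarrow> ('v, 'm) prog list \<Rightarrow> ('v, 'm) prog list" where
  "transl_conc I L ps = map (\<lambda>i. transl I L (Suc i) (ps ! i)) [0..<length ps]"

definition abstracts :: "('v, 'm) impl \<Rightarrow> ('v, 'm, 's) library \<Rightarrow> ('v, 'm) pexec \<Rightarrow> ('v, 'm) pexec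
                         \<Rightarrow> (('v, 'm) event \<Rightarrow> ('v, 'm) event) \<Rightarrow> bool" where
  "abstracts I L G G' f \<longleftrightarrow>
     f ` fst G = fst G' \<and>
     evs_of L (fst G) = {} \<and> evs_of L (fst G') = fst G' \<and>
     (\<forall>(x, y)\<in>snd G. (f x, f y) \<in> (snd G')\<^sup>*) \<and>
     (\<forall>e1\<in>fst G. \<forall>e2\<in>fst G. (f e1, f e2) \<in> snd G' \<longrightarrow> (e1, e2) \<in> snd G) \<and>
     (\<forall>e'\<in>fst G'. let A = {e\<in>fst G. f e = e'} in
        ((outv e', 0), (A, snd G \<inter> (A \<times> A))) \<in> sem (thread e') (I (thread e') (meth e') (args e')))"

definition locally_sound :: "nat \<Rightarrow> ('s \<times> 's) set \<Rightarrow> ('v, 'm) impl \<Rightarrow> ('v, 'm, 's) library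
                             \<Rightarrow> ('v, 'm, 's) library set \<Rightarrow> bool" where
  "locally_sound T to I L \<Lambda> \<longleftrightarrow>
   (\<forall>X E' po' f. consistent T to \<Lambda> X \<and> plain_exec T (E', po') \<and> abstracts I L (ev X, po X) (E', po') f \<longrightarrow>
     (\<exists>stmp' so' g.
        let S' = {(e, a). e \<in> E' \<and> a \<in> stmp' e};
            X0 = \<lparr> ev = E', po = po', stmp = stmp', so = so', hb = {} \<rparr>
        in (\<forall>e\<in>E'. stmp' e \<noteq> {}) \<and> (\<forall>e. e \<notin> E' \<longrightarrow> stmp' e = {}) \<and>
           so' \<subseteq> S' \<times> S' \<and>
           (\<forall>x\<in>S'. g x \<in> SEv X) \<and>
           (\<forall>e' a' e a. (e', a') \<in> S' \<and> g (e', a') = (e, a) \<longrightarrow>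
               f e = e' \<and>
               (\<forall>a0. (a0, a') \<in> to \<longrightarrow> (\<exists>e1 a1. (e1, a1) \<in> SEv X \<and> f e1 = e' \<and> (a0, a1) \<in> to \<and>
                                               ((e1, a1), (e, a)) \<in> (hb X)\<^sup>*)) \<and>
               (\<forall>a0. (a', a0) \<in> to \<longrightarrow> (\<exists>e2 a2. (e2, a2) \<in> SEv X \<and> f e2 = e' \<and> (a2, a0) \<in> to \<and>
                                               ((e, a), (e2, a2)) \<in> (hb X)\<^sup>*))) \<and>
           (\<forall>(x, y)\<in>so'. (g x, g y) \<in> hb X) \<and>
           (\<forall>hb'. hb' \<subseteq> S' \<times> S' \<and> trans hb' \<and> (ppo to X0 \<union> so')\<^sup>+ \<subseteq> hb' \<and>
                  (\<forall>(x, y)\<in>hb'. (g x, g y) \<in> hb X)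
                  \<longrightarrow> X0\<lparr>hb := hb'\<rparr> \<in> lC L)))"

end

theory Submission
  imports Defs
begin

definition wfG :: "nat \<Rightarrow> ('v, 'm) pexec \<Rightarrow> bool" where
  "wfG t G \<longleftrightarrow> snd G \<subseteq> fst G \<times> fst G \<and> finite (fst G) \<and> (\<forall>e\<in>fst G. fst e = t)"

lemma fst_seqc[simp]: "fst (seqc G1 G2) = fst G1 \<union> fst G2"
  by (simp add: seqc_def)
lemma snd_seqc[simp]: "snd (seqc G1 G2) = snd G1 \<union> snd G2 \<union> fst G1 \<times> fst G2"
  by (simp add: seqc_def)

lemma seq_list_Nil[simp]: "seq_list [] = empty_G" by (simp add: seq_list_def)
lemma seq_list_Cons[simp]: "seq_list (G # Gs) = seqc G (seq_list Gs)" by (simp add: seq_list_def)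

lemma fst_seq_list: "fst (seq_list Gs) = \<Union>(fst ` set Gs)"
  by (induction Gs) (auto simp: empty_G_def)

lemma wfG_empty[simp]: "wfG t empty_G" by (simp add: wfG_def empty_G_def)

lemma wfG_seqc: "wfG t G1 \<Longrightarrow> wfG t G2 \<Longrightarrow> wfG t (seqc G1 G2)"
  by (auto simp: wfG_def)

lemma wfG_seq_list: "\<forall>G\<in>set Gs. wfG t G \<Longrightarrow> wfG t (seq_list Gs)"
  by (induction Gs) (auto intro: wfG_seqc)

lemma sem_wfG: "(r, G) \<in> sem t p \<Longrightarrow> wfG t G"
proof (induction p arbitrary: r G)
  case (PVal x)
  then show ?case by simp
next
  case (Call m vs)
  then show ?case by (auto simp: wfG_def)
next
  case (Let p f)
  from Let.prems show ?case
  proof (auto, goal_cases)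
    case (1 a b aa ba ab bb v)
    then show ?case using Let.IH(1)[of "(v,0)" "(aa,ba)"] Let.IH(2)[of "f v" "(a,b)" "(ab,bb)"]
      by (auto intro: wfG_seqc)
  next
    case 2
    then show ?case using Let.IH(1) by (metis prod.collapse)
  qed
next
  case (Loop p)
  from Loop.prems obtain v k Gs j where G: "r = (v,k)" "G = seq_list Gs" "length Gs = Suc j"
    "\<forall>i<j. \<exists>u. ((u, 0), Gs ! i) \<in> sem t p" "((v, Suc k), Gs ! j) \<in> sem t p" by auto
  have "\<forall>G\<in>set Gs. wfG t G"
  proof
    fix G' assume "G' \<in> set Gs"
    then obtain i where i: "i < Suc j" "G' = Gs ! i" using G(3) by (metis in_set_conv_nth)
    show "wfG t G'"
    proof (cases "i < j")
      case True then show ?thesis using G(4) i Loop.IH by blast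
    next
      case False then have "i = j" using i by simp
      then show ?thesis using G(5) i Loop.IH by blast
    qed
  qed
  then show ?case using G wfG_seq_list by blast
next
  case (Break k v)
  then show ?case by simp
qed

lemma snd_seq_list: "snd (seq_list Gs) = (\<Union>i<length Gs. snd (Gs!i)) \<union>
   {(x,y). \<exists>i j. i < j \<and> j < length Gs \<and> x \<in> fst (Gs!i) \<and> y \<in> fst (Gs!j)}"
proof (induction Gs)
  case Nil
  then show ?case by (simp add: empty_G_def)
next
  case (Cons G Gs)
  have A: "(\<Union>i<length (G#Gs). snd ((G#Gs)!i)) = snd G \<union> (\<Union>i<length Gs. snd (Gs!i))"
    by (simp add: lessThan_Suc_eq_insert_0 UN_le_eq_Un0 image_Suc_lessThan[symmetric]
        del: image_Suc_lessThan)
  have B: "{(x,y). \<exists>i j. i < j \<and> j < length (G#Gs) \<and> x \<in> fst ((G#Gs)!i) \<and> y \<in> fst ((G#Gs)!j)}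
     = fst G \<times> (\<Union>(fst ` set Gs)) \<union> {(x,y). \<exists>i j. i < j \<and> j < length Gs \<and> x \<in> fst (Gs!i) \<and> y \<in> fst (Gs!j)}"
  proof (intro set_eqI iffI)
    fix z assume "z \<in> {(x,y). \<exists>i j. i < j \<and> j < length (G#Gs) \<and> x \<in> fst ((G#Gs)!i) \<and> y \<in> fst ((G#Gs)!j)}"
    then obtain x y i j where z: "z = (x,y)" "i < j" "j < length (G#Gs)" "x \<in> fst ((G#Gs)!i)" "y \<in> fst ((G#Gs)!j)" by blast
    then obtain j' where j': "j = Suc j'" by (cases j) auto
    show "z \<in> fst G \<times> (\<Union>(fst ` set Gs)) \<union> {(x,y). \<exists>i j. i < j \<and> j < length Gs \<and> x \<in> fst (Gs!i) \<and> y \<in> fst (Gs!j)}"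
    proof (cases i)
      case 0
      then show ?thesis using z j' by (auto simp: nth_mem)
    next
      case (Suc i')
      then show ?thesis using z j' by auto
    qed
  next
    fix z assume "z \<in> fst G \<times> (\<Union>(fst ` set Gs)) \<union> {(x,y). \<exists>i j. i < j \<and> j < length Gs \<and> x \<in> fst (Gs!i) \<and> y \<in> fst (Gs!j)}"
    then show "z \<in> {(x,y). \<exists>i j. i < j \<and> j < length (G#Gs) \<and> x \<in> fst ((G#Gs)!i) \<and> y \<in> fst ((G#Gs)!j)}"
    proof
      assume "z \<in> fst G \<times> (\<Union>(fst ` set Gs))"
      then obtain x y j where "z = (x,y)" "x \<in> fst G" "j < length Gs" "y \<in> fst (Gs!j)"
        by (auto simp: in_set_conv_nth)
      then show ?thesis apply (simp only: mem_Collect_eq case_prod_conv)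
        apply (rule exI[of _ 0], rule exI[of _ "Suc j"]) by simp
    next
      assume "z \<in> {(x,y). \<exists>i j. i < j \<and> j < length Gs \<and> x \<in> fst (Gs!i) \<and> y \<in> fst (Gs!j)}"
      then obtain x y i j where "z = (x,y)" "i < j" "j < length Gs" "x \<in> fst (Gs!i)" "y \<in> fst (Gs!j)" by blast
      then show ?thesis apply (simp only: mem_Collect_eq case_prod_conv)
        apply (rule exI[of _ "Suc i"], rule exI[of _ "Suc j"]) by simp
    qed
  qed
  show ?case unfolding A B using Cons.IH by (auto simp: fst_seq_list)
qed


definition quot :: "('a \<Rightarrow> 'b) \<Rightarrow> ('a \<times> 'a) set \<Rightarrow> ('b \<times> 'b) set" where
  "quot f R = {(f x, f y) | x y. (x, y) \<in> R \<and> f x \<noteq> f y}"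

definition absG :: "('a \<Rightarrow> 'b) \<Rightarrow> 'a set \<times> ('a \<times> 'a) set \<Rightarrow> 'b set \<times> ('b \<times> 'b) set" where
  "absG f G = (f ` fst G, quot f (snd G))"

definition conv :: "('a \<Rightarrow> 'b) \<Rightarrow> 'a set \<times> ('a \<times> 'a) set \<Rightarrow> bool" where
  "conv f G \<longleftrightarrow> (\<forall>(x, y)\<in>snd G. f x \<noteq> f y \<longrightarrow>
      (\<forall>x'\<in>fst G. \<forall>y'\<in>fst G. f x' = f x \<longrightarrow> f y' = f y \<longrightarrow> (x', y') \<in> snd G))"

definition blocks_ok :: "nat \<Rightarrow> ('v,'m) impl \<Rightarrow> ('v,'m,'s) library \<Rightarrow> ('v,'m) pexec
    \<Rightarrow> (('v,'m) event set \<times> ('v,'m) lab) set \<Rightarrow> bool" where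
  "blocks_ok t I L G Bs \<longleftrightarrow> (\<forall>b\<in>Bs. fst b \<noteq> {} \<and> fst b \<subseteq> fst G \<and> fst (snd b) \<in> lM L \<and>
      ((snd (snd (snd b)), 0), (fst b, snd G \<inter> fst b \<times> fst b)) \<in> sem t (I t (fst (snd b)) (fst (snd (snd b))))) \<and>
    (\<forall>b1\<in>Bs. \<forall>b2\<in>Bs. b1 \<noteq> b2 \<longrightarrow> fst b1 \<inter> fst b2 = {})"

definition fok :: "nat \<Rightarrow> ('v,'m) pexec \<Rightarrow> (('v,'m) event set \<times> ('v,'m) lab) set
    \<Rightarrow> (('v,'m) event \<Rightarrow> ('v,'m) event) \<Rightarrow> bool" where
  "fok t G Bs f \<longleftrightarrow> (\<forall>b\<in>Bs. \<exists>\<iota>. \<forall>x\<in>fst b. f x = (t, \<iota>, snd b)) \<and>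
     (\<forall>x\<in>fst G. (\<forall>b\<in>Bs. x \<notin> fst b) \<longrightarrow> f x = x) \<and>
     (\<forall>x\<in>fst G. \<forall>y\<in>fst G. f x = f y \<longrightarrow> x = y \<or> (\<exists>b\<in>Bs. x \<in> fst b \<and> y \<in> fst b))"

lemma absG_empty[simp]: "absG f empty_G = empty_G"
  by (simp add: absG_def empty_G_def quot_def)

lemma quot_Un: "quot f (A \<union> B) = quot f A \<union> quot f B"
  unfolding quot_def by blast

lemma quot_times: "\<forall>x\<in>E1. \<forall>y\<in>E2. f x \<noteq> f y \<Longrightarrow> quot f (E1 \<times> E2) = f ` E1 \<times> f ` E2"
  unfolding quot_def by blast

lemma absG_seqc: "\<forall>x\<in>fst G1. \<forall>y\<in>fst G2. f x \<noteq> f y \<Longrightarrow>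
    absG f (seqc G1 G2) = seqc (absG f G1) (absG f G2)"
  unfolding absG_def seqc_def by (simp add: quot_Un quot_times image_Un)

lemma absG_seq_list: "\<forall>i<length Gs. \<forall>j<length Gs. i \<noteq> j \<longrightarrow> (\<forall>x\<in>fst (Gs!i). \<forall>y\<in>fst (Gs!j). f x \<noteq> f y)
   \<Longrightarrow> absG f (seq_list Gs) = seq_list (map (absG f) Gs)"
proof (induction Gs)
  case Nil
  then show ?case by simp
next
  case (Cons G Gs)
  have h: "\<forall>i<length Gs. \<forall>j<length Gs. i \<noteq> j \<longrightarrow> (\<forall>x\<in>fst (Gs!i). \<forall>y\<in>fst (Gs!j). f x \<noteq> f y)"
  proof (intro allI impI)
    fix i j assume "i < length Gs" "j < length Gs" "i \<noteq> j"
    then show "\<forall>x\<in>fst (Gs!i). \<forall>y\<in>fst (Gs!j). f x \<noteq> f y"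
      using Cons.prems[rule_format, of "Suc i" "Suc j"] by simp
  qed
  have c: "\<forall>x\<in>fst G. \<forall>y\<in>fst (seq_list Gs). f x \<noteq> f y"
  proof (intro ballI)
    fix x y assume "x \<in> fst G" "y \<in> fst (seq_list Gs)"
    then obtain j where "j < length Gs" "y \<in> fst (Gs!j)" by (auto simp: fst_seq_list in_set_conv_nth)
    then show "f x \<noteq> f y" using \<open>x \<in> fst G\<close> Cons.prems[rule_format, of 0 "Suc j"] by simp
  qed
  show ?case using absG_seqc[OF c] Cons.IH[OF h] by simp
qed

lemma restr_seq_list:
  assumes wf: "\<forall>i<length Gs. snd (Gs!i) \<subseteq> fst (Gs!i) \<times> fst (Gs!i)"
    and disj: "\<forall>i<length Gs. \<forall>i'<length Gs. i \<noteq> i' \<longrightarrow> fst (Gs!i) \<inter> fst (Gs!i') = {}"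
    and i: "i < length Gs" and A: "A \<subseteq> fst (Gs!i)"
  shows "snd (seq_list Gs) \<inter> A \<times> A = snd (Gs!i) \<inter> A \<times> A"
proof
  show "snd (Gs!i) \<inter> A \<times> A \<subseteq> snd (seq_list Gs) \<inter> A \<times> A"
    using i by (auto simp: snd_seq_list)
next
  show "snd (seq_list Gs) \<inter> A \<times> A \<subseteq> snd (Gs!i) \<inter> A \<times> A"
  proof
    fix z assume z: "z \<in> snd (seq_list Gs) \<inter> A \<times> A"
    then obtain x y where xy: "z = (x,y)" "x \<in> A" "y \<in> A" by auto
    from z xy have "(x,y) \<in> (\<Union>i<length Gs. snd (Gs!i)) \<or>
       (\<exists>i j. i < j \<and> j < length Gs \<and> x \<in> fst (Gs!i) \<and> y \<in> fst (Gs!j))"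
      by (auto simp: snd_seq_list)
    then show "z \<in> snd (Gs!i) \<inter> A \<times> A"
    proof
      assume "(x,y) \<in> (\<Union>i<length Gs. snd (Gs!i))"
      then obtain k where k: "k < length Gs" "(x,y) \<in> snd (Gs!k)" by auto
      then have "x \<in> fst (Gs!k)" using wf by auto
      have "x \<in> fst (Gs!i)" using A xy by auto
      have "k = i"
      proof (rule ccontr)
        assume "k \<noteq> i"
        then have "fst (Gs!k) \<inter> fst (Gs!i) = {}" using disj k i by simp
        then show False using \<open>x \<in> fst (Gs!i)\<close> \<open>x \<in> fst (Gs!k)\<close> by blast
      qed
      then show ?thesis using k xy by auto
    next
      assume "\<exists>i j. i < j \<and> j < length Gs \<and> x \<in> fst (Gs!i) \<and> y \<in> fst (Gs!j)"
      then obtain k l where kl: "k < l" "l < length Gs" "x \<in> fst (Gs!k)" "y \<in> fst (Gs!l)" by auto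
      have "x \<in> fst (Gs!i)" "y \<in> fst (Gs!i)" using A xy by auto
      have "k = i"
      proof (rule ccontr)
        assume "k \<noteq> i"
        then have "fst (Gs!k) \<inter> fst (Gs!i) = {}" using disj kl i by simp
        then show False using \<open>x \<in> fst (Gs!i)\<close> kl by blast
      qed
      moreover have "l = i"
      proof (rule ccontr)
        assume "l \<noteq> i"
        then have "fst (Gs!l) \<inter> fst (Gs!i) = {}" using disj kl i by simp
        then show False using \<open>y \<in> fst (Gs!i)\<close> kl by blast
      qed
      ultimately show ?thesis using kl by simp
    qed
  qed
qed

locale comb =
  fixes t :: nat and I :: "('v,'m) impl" and L :: "('v,'m,'s) library"
    and Gs :: "('v,'m) pexec list" and BB :: "nat \<Rightarrow> (('v,'m) event set \<times> ('v,'m) lab) set"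
  assumes wf: "\<forall>i<length Gs. wfG t (Gs!i)"
   and bo: "\<forall>i<length Gs. blocks_ok t I L (Gs!i) (BB i)"
   and disj: "\<forall>i<length Gs. \<forall>i'<length Gs. i \<noteq> i' \<longrightarrow> fst (Gs!i) \<inter> fst (Gs!i') = {}"
begin

lemma in_fst: "i < length Gs \<Longrightarrow> x \<in> fst (Gs!i) \<Longrightarrow> x \<in> fst (seq_list Gs)"
  by (auto simp: fst_seq_list)

lemma same_idx: "i < length Gs \<Longrightarrow> j < length Gs \<Longrightarrow> x \<in> fst (Gs!i) \<Longrightarrow> x \<in> fst (Gs!j) \<Longrightarrow> i = j"
  using disj by blast

lemma blk_sub: "i < length Gs \<Longrightarrow> b \<in> BB i \<Longrightarrow> fst b \<subseteq> fst (Gs!i)"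
  using bo by (auto simp: blocks_ok_def)

lemma combine1: "blocks_ok t I L (seq_list Gs) (\<Union>i<length Gs. BB i)"
  unfolding blocks_ok_def
proof (intro conjI ballI impI)
  fix b assume "b \<in> (\<Union>i<length Gs. BB i)"
  then obtain i where i: "i < length Gs" "b \<in> BB i" by auto
  have wfi: "\<forall>i<length Gs. snd (Gs!i) \<subseteq> fst (Gs!i) \<times> fst (Gs!i)" using wf by (auto simp: wfG_def)
  from bo i have b: "fst b \<noteq> {}" "fst b \<subseteq> fst (Gs!i)" "fst (snd b) \<in> lM L"
    "((snd (snd (snd b)), 0), (fst b, snd (Gs!i) \<inter> fst b \<times> fst b)) \<in> sem t (I t (fst (snd b)) (fst (snd (snd b))))"
    by (auto simp: blocks_ok_def)
  show "fst b \<noteq> {}" by fact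
  show "fst b \<subseteq> fst (seq_list Gs)" using b(2) in_fst i by blast
  show "fst (snd b) \<in> lM L" by fact
  show "((snd (snd (snd b)), 0), (fst b, snd (seq_list Gs) \<inter> fst b \<times> fst b)) \<in> sem t (I t (fst (snd b)) (fst (snd (snd b))))"
    using b(4) restr_seq_list[OF wfi disj i(1) b(2)] by simp
next
  fix b1 b2 assume b: "b1 \<in> (\<Union>i<length Gs. BB i)" "b2 \<in> (\<Union>i<length Gs. BB i)" "b1 \<noteq> b2"
  then obtain i1 i2 where i: "i1 < length Gs" "b1 \<in> BB i1" "i2 < length Gs" "b2 \<in> BB i2" by auto
  show "fst b1 \<inter> fst b2 = {}"
  proof (cases "i1 = i2")
    case True
    then show ?thesis using bo i b by (auto simp: blocks_ok_def)
  next
    case False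
    then show ?thesis using disj i blk_sub[OF i(1,2)] blk_sub[OF i(3,4)] by blast
  qed
qed

context
  fixes f
  assumes fk: "fok t (seq_list Gs) (\<Union>i<length Gs. BB i) f"
begin

lemma part: "i < length Gs \<Longrightarrow> j < length Gs \<Longrightarrow> x \<in> fst (Gs!i) \<Longrightarrow> y \<in> fst (Gs!j) \<Longrightarrow> f x = f y
   \<Longrightarrow> i = j \<and> (x = y \<or> (\<exists>b\<in>BB i. x \<in> fst b \<and> y \<in> fst b))"
proof -
  assume a: "i < length Gs" "j < length Gs" "x \<in> fst (Gs!i)" "y \<in> fst (Gs!j)" "f x = f y"
  have "x = y \<or> (\<exists>b\<in>(\<Union>i<length Gs. BB i). x \<in> fst b \<and> y \<in> fst b)"
    using fk a in_fst unfolding fok_def by blast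
  then show ?thesis
  proof
    assume "x = y" then show ?thesis using same_idx a by blast
  next
    assume "\<exists>b\<in>(\<Union>i<length Gs. BB i). x \<in> fst b \<and> y \<in> fst b"
    then obtain k b where k: "k < length Gs" "b \<in> BB k" "x \<in> fst b" "y \<in> fst b" by auto
    then have "x \<in> fst (Gs!k)" "y \<in> fst (Gs!k)" using blk_sub[OF k(1,2)] by auto
    then have "i = k" "j = k" using same_idx a k by blast+
    then show ?thesis using k by auto
  qed
qed

lemma combine_fok: "i < length Gs \<Longrightarrow> fok t (Gs!i) (BB i) f"
  unfolding fok_def
proof (intro conjI ballI impI)
  assume i: "i < length Gs"
  fix b assume "b \<in> BB i"
  then show "\<exists>\<iota>. \<forall>x\<in>fst b. f x = (t, \<iota>, snd b)" using fk i unfolding fok_def by blast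
next
  assume i: "i < length Gs"
  fix x assume x: "x \<in> fst (Gs!i)" "\<forall>b\<in>BB i. x \<notin> fst b"
  have "\<forall>b\<in>(\<Union>i<length Gs. BB i). x \<notin> fst b"
  proof
    fix b assume "b \<in> (\<Union>i<length Gs. BB i)"
    then obtain k where k: "k < length Gs" "b \<in> BB k" by auto
    show "x \<notin> fst b"
    proof
      assume "x \<in> fst b"
      then have "x \<in> fst (Gs!k)" using blk_sub[OF k] by auto
      then have "k = i" using same_idx i k x by blast
      then show False using x k \<open>x \<in> fst b\<close> by auto
    qed
  qed
  then show "f x = x" using fk x i in_fst unfolding fok_def by blast
next
  assume i: "i < length Gs"
  fix x y assume "x \<in> fst (Gs!i)" "y \<in> fst (Gs!i)" "f x = f y"
  then show "x = y \<or> (\<exists>b\<in>BB i. x \<in> fst b \<and> y \<in> fst b)" using part i by blast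
qed

lemma cross: "i < length Gs \<Longrightarrow> j < length Gs \<Longrightarrow> i \<noteq> j \<Longrightarrow> x \<in> fst (Gs!i) \<Longrightarrow> y \<in> fst (Gs!j) \<Longrightarrow> f x \<noteq> f y"
  using part by blast

lemma combine_abs: "absG f (seq_list Gs) = seq_list (map (absG f) Gs)"
  by (rule absG_seq_list) (use cross in blast)

lemma combine_disj: "\<forall>i<length Gs. \<forall>i'<length Gs. i \<noteq> i' \<longrightarrow> fst (absG f (Gs!i)) \<inter> fst (absG f (Gs!i')) = {}"
  unfolding absG_def using cross by fastforce

lemma combine_conv: "\<forall>i<length Gs. conv f (Gs!i) \<Longrightarrow> conv f (seq_list Gs)"
  unfolding conv_def
proof (intro ballI impI, clarify)
  assume cv: "\<forall>i<length Gs. \<forall>(x, y)\<in>snd (Gs ! i). f x \<noteq> f y \<longrightarrow>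
       (\<forall>x'\<in>fst (Gs ! i). \<forall>y'\<in>fst (Gs ! i). f x' = f x \<longrightarrow> f y' = f y \<longrightarrow> (x', y') \<in> snd (Gs ! i))"
  fix x y x' y' assume a: "(x,y) \<in> snd (seq_list Gs)" "f x \<noteq> f y" "x' \<in> fst (seq_list Gs)"
    "y' \<in> fst (seq_list Gs)" "f x' = f x" "f y' = f y"
  obtain i' where i': "i' < length Gs" "x' \<in> fst (Gs!i')" using a(3) by (auto simp: fst_seq_list in_set_conv_nth)
  obtain j' where j': "j' < length Gs" "y' \<in> fst (Gs!j')" using a(4) by (auto simp: fst_seq_list in_set_conv_nth)
  from a(1) have "(x,y) \<in> (\<Union>i<length Gs. snd (Gs!i)) \<or>
       (\<exists>i j. i < j \<and> j < length Gs \<and> x \<in> fst (Gs!i) \<and> y \<in> fst (Gs!j))"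
    by (auto simp: snd_seq_list)
  then show "(x', y') \<in> snd (seq_list Gs)"
  proof
    assume "(x,y) \<in> (\<Union>i<length Gs. snd (Gs!i))"
    then obtain k where k: "k < length Gs" "(x,y) \<in> snd (Gs!k)" by auto
    then have xy: "x \<in> fst (Gs!k)" "y \<in> fst (Gs!k)" using wf by (auto simp: wfG_def)
    have "i' = k" using part[OF i'(1) k(1) i'(2) xy(1) a(5)] by blast
    moreover have "j' = k" using part[OF j'(1) k(1) j'(2) xy(2) a(6)] by blast
    ultimately have "(x',y') \<in> snd (Gs!k)" using cv k a i' j' by fastforce
    then show ?thesis using k by (auto simp: snd_seq_list)
  next
    assume "\<exists>i j. i < j \<and> j < length Gs \<and> x \<in> fst (Gs!i) \<and> y \<in> fst (Gs!j)"
    then obtain k l where kl: "k < l" "l < length Gs" "x \<in> fst (Gs!k)" "y \<in> fst (Gs!l)" by auto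
    have "i' = k" using part[OF i'(1) _ i'(2) kl(3) a(5)] kl by simp
    moreover have "j' = l" using part[OF j'(1) kl(2) j'(2) kl(4) a(6)] by blast
    ultimately show ?thesis using kl i' j' by (auto simp: snd_seq_list)
  qed
qed

end
end


lemma seqc_empty2[simp]: "seqc G empty_G = G"
  by (simp add: seqc_def empty_G_def)

lemma lt2: "(i < Suc (Suc 0)) = (i = 0 \<or> i = 1)" by auto

lemma conv_emptyrel: "snd G = {} \<Longrightarrow> conv f G"
  by (simp add: conv_def)

lemma main_ind:
  assumes wd: "well_defined T I L \<Lambda>" and t: "t \<in> {1..T}"
  shows "(r, G) \<in> sem t (transl I L t p) \<Longrightarrow> \<exists>Bs. blocks_ok t I L G Bs \<and>
            (\<forall>f. fok t G Bs f \<longrightarrow> (r, absG f G) \<in> sem t p \<and> conv f G)"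
proof (induction p arbitrary: r G)
  case (PVal v)
  then have "G = empty_G" "r = (v,0)" by auto
  then show ?case
    by (intro exI[of _ "{}"]) (simp add: blocks_ok_def empty_G_def conv_emptyrel absG_def quot_def)
next
  case (Break k v)
  then have "G = empty_G" "r = (v,k)" by auto
  then show ?case
    by (intro exI[of _ "{}"]) (simp add: blocks_ok_def empty_G_def conv_emptyrel absG_def quot_def)
next
  case (Call m vs)
  show ?case
  proof (cases "m \<in> lM L")
    case True
    then have sG: "(r, G) \<in> sem t (I t m vs)" using Call.prems by simp
    obtain v k where r: "r = (v,k)" by (cases r)
    have k: "k = 0"
    proof (rule ccontr)
      assume "k \<noteq> 0"
      then obtain k' where "k = Suc k'" by (cases k) auto
      then show False using wd t True sG r unfolding well_defined_def by blast
    qed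
    have ne: "fst G \<noteq> {}" using wd t True sG r k unfolding well_defined_def by (metis prod.collapse)
    have wfG: "snd G \<subseteq> fst G \<times> fst G" using sem_wfG[OF sG] by (simp add: wfG_def)
    have bo: "blocks_ok t I L G {(fst G, (m, vs, v))}"
      unfolding blocks_ok_def using ne True sG r k wfG by (simp add: Int_absorb2)
    show ?thesis
    proof (intro exI[of _ "{(fst G, (m, vs, v))}"] conjI allI impI bo)
      fix f assume "fok t G {(fst G, (m, vs, v))} f"
      then obtain \<iota> where fi: "\<forall>x\<in>fst G. f x = (t, \<iota>, (m, vs, v))" unfolding fok_def by auto
      have i1: "f ` fst G = {(t, \<iota>, (m, vs, v))}" using fi ne by auto
      have i2: "quot f (snd G) = {}" using fi wfG unfolding quot_def by fastforce
      have "absG f G = ({(t, \<iota>, (m, vs, v))}, {})" using i1 i2 by (simp add: absG_def)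
      then show "(r, absG f G) \<in> sem t (Call m vs)" using r k by simp
      show "conv f G" unfolding conv_def using fi wfG by fastforce
    qed
  next
    case False
    then obtain v' \<iota> where G: "r = (v',0)" "G = ({(t, \<iota>, (m, vs, v'))}, {})" using Call.prems by auto
    show ?thesis
    proof (intro exI[of _ "{}"] conjI allI impI)
      show "blocks_ok t I L G {}" by (simp add: blocks_ok_def)
      fix f assume "fok t G {} f"
      then have "f (t, \<iota>, (m, vs, v')) = (t, \<iota>, (m, vs, v'))" unfolding fok_def using G by auto
      then have "absG f G = G" using G by (simp add: absG_def quot_def)
      then show "(r, absG f G) \<in> sem t (Call m vs)" using G by auto
      show "conv f G" using G by (simp add: conv_emptyrel)
    qed
  qed
next
  case (Let p g)
  from Let.prems have "(\<exists>G1 G2 v. G = seqc G1 G2 \<and> ((v, 0), G1) \<in> sem t (transl I L t p) \<and>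
        (r, G2) \<in> sem t (transl I L t (g v)) \<and> fst G1 \<inter> fst G2 = {}) \<or>
      ((r, G) \<in> sem t (transl I L t p) \<and> snd r \<noteq> 0)" by auto
  then show ?case
  proof
    assume "\<exists>G1 G2 v. G = seqc G1 G2 \<and> ((v, 0), G1) \<in> sem t (transl I L t p) \<and>
        (r, G2) \<in> sem t (transl I L t (g v)) \<and> fst G1 \<inter> fst G2 = {}"
    then obtain G1 G2 v where G: "G = seqc G1 G2" "((v, 0), G1) \<in> sem t (transl I L t p)"
        "(r, G2) \<in> sem t (transl I L t (g v))" "fst G1 \<inter> fst G2 = {}" by blast
    obtain Bs1 where B1: "blocks_ok t I L G1 Bs1"
      "\<forall>f. fok t G1 Bs1 f \<longrightarrow> ((v,0), absG f G1) \<in> sem t p \<and> conv f G1"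
      using Let.IH(1)[OF G(2)] by blast
    obtain Bs2 where B2: "blocks_ok t I L G2 Bs2"
      "\<forall>f. fok t G2 Bs2 f \<longrightarrow> (r, absG f G2) \<in> sem t (g v) \<and> conv f G2"
      using Let.IH(2)[OF _ G(3)] by blast
    define BB where "BB = (\<lambda>i::nat. if i = 0 then Bs1 else Bs2)"
    interpret c: comb t I L "[G1, G2]" BB
    proof
      show "\<forall>i<length [G1, G2]. wfG t ([G1, G2] ! i)"
        using sem_wfG[OF G(2)] sem_wfG[OF G(3)] by (auto simp: lt2)
      show "\<forall>i<length [G1, G2]. blocks_ok t I L ([G1, G2] ! i) (BB i)"
        using B1 B2 by (auto simp: lt2 BB_def)
      show "\<forall>i<length [G1, G2]. \<forall>i'<length [G1, G2]. i \<noteq> i' \<longrightarrow> fst ([G1, G2] ! i) \<inter> fst ([G1, G2] ! i') = {}"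
        using G(4) by (auto simp: lt2)
    qed
    have U: "(\<Union>i<length [G1, G2]. BB i) = Bs1 \<union> Bs2"
      by (auto simp: BB_def lt2)
    have SL: "seq_list [G1, G2] = G" using G(1) by simp
    show ?case
    proof (intro exI[of _ "Bs1 \<union> Bs2"] conjI allI impI)
      show "blocks_ok t I L G (Bs1 \<union> Bs2)" using c.combine1 U SL by simp
      fix f assume fk: "fok t G (Bs1 \<union> Bs2) f"
      then have fk': "fok t (seq_list [G1, G2]) (\<Union>i<length [G1, G2]. BB i) f" using U SL by simp
      have f1: "fok t G1 Bs1 f" using c.combine_fok[OF fk', of 0] by (simp add: BB_def)
      have f2: "fok t G2 Bs2 f" using c.combine_fok[OF fk', of 1] by (simp add: BB_def)
      have ab: "absG f G = seqc (absG f G1) (absG f G2)" using c.combine_abs[OF fk'] SL by simp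
      have dj: "fst (absG f G1) \<inter> fst (absG f G2) = {}" using c.combine_disj[OF fk'] by force
      have m1: "((v,0), absG f G1) \<in> sem t p" using B1(2) f1 by blast
      have m2: "(r, absG f G2) \<in> sem t (g v)" using B2(2) f2 by blast
      have "(r, seqc (absG f G1) (absG f G2)) \<in> {(r, seqc G1 G2) | r G1 G2 v. ((v,0),G1) \<in> sem t p \<and> (r,G2) \<in> sem t (g v) \<and> fst G1 \<inter> fst G2 = {}}"
        using m1 m2 dj by blast
      then show "(r, absG f G) \<in> sem t (Let p g)" unfolding ab sem.simps by (rule UnI1)
      have "conv f (seq_list [G1, G2])"
        by (rule c.combine_conv[OF fk']) (use B1(2) f1 B2(2) f2 in \<open>auto simp: lt2\<close>)
      then show "conv f G" using SL by simp
    qed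
  next
    assume a: "(r, G) \<in> sem t (transl I L t p) \<and> snd r \<noteq> 0"
    then obtain Bs where B: "blocks_ok t I L G Bs"
      "\<forall>f. fok t G Bs f \<longrightarrow> (r, absG f G) \<in> sem t p \<and> conv f G"
      using Let.IH(1) by blast
    show ?case using B a by (intro exI[of _ Bs]) auto
  qed
next
  case (Loop p)
  from Loop.prems obtain v k Gs j where G: "r = (v,k)" "G = seq_list Gs" "length Gs = Suc j"
    "\<forall>i<j. \<exists>u. ((u, 0), Gs ! i) \<in> sem t (transl I L t p)" "((v, Suc k), Gs ! j) \<in> sem t (transl I L t p)"
    "\<forall>i<length Gs. \<forall>i'<length Gs. i \<noteq> i' \<longrightarrow> fst (Gs ! i) \<inter> fst (Gs ! i') = {}"
    by auto
  define R where "R = (\<lambda>i. if i < j then (SOME u. ((u, 0), Gs ! i) \<in> sem t (transl I L t p), 0) else (v, Suc k))"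
  have R: "\<forall>i<Suc j. (R i, Gs ! i) \<in> sem t (transl I L t p)"
  proof (intro allI impI)
    fix i assume i: "i < Suc j"
    show "(R i, Gs ! i) \<in> sem t (transl I L t p)"
    proof (cases "i < j")
      case True
      then have "\<exists>u. ((u, 0), Gs ! i) \<in> sem t (transl I L t p)" using G(4) by blast
      then have "((SOME u. ((u, 0), Gs ! i) \<in> sem t (transl I L t p), 0), Gs ! i) \<in> sem t (transl I L t p)"
        by (rule someI_ex)
      then show ?thesis using True unfolding R_def by simp
    next
      case False
      then have "i = j" using i by simp
      then show ?thesis using G(5) unfolding R_def by simp
    qed
  qed
  have "\<forall>i. \<exists>Bs. i < Suc j \<longrightarrow> blocks_ok t I L (Gs ! i) Bs \<and>
            (\<forall>f. fok t (Gs ! i) Bs f \<longrightarrow> (R i, absG f (Gs ! i)) \<in> sem t p \<and> conv f (Gs ! i))"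
    using R Loop.IH by blast
  then obtain BB where BB: "\<forall>i<Suc j. blocks_ok t I L (Gs ! i) (BB i) \<and>
            (\<forall>f. fok t (Gs ! i) (BB i) f \<longrightarrow> (R i, absG f (Gs ! i)) \<in> sem t p \<and> conv f (Gs ! i))"
    by metis
  interpret c: comb t I L Gs BB
  proof
    show "\<forall>i<length Gs. wfG t (Gs ! i)" using R sem_wfG G(3) by metis
    show "\<forall>i<length Gs. blocks_ok t I L (Gs ! i) (BB i)" using BB G(3) by simp
    show "\<forall>i<length Gs. \<forall>i'<length Gs. i \<noteq> i' \<longrightarrow> fst (Gs ! i) \<inter> fst (Gs ! i') = {}" by (fact G(6))
  qed
  show ?case
  proof (intro exI[of _ "\<Union>i<length Gs. BB i"] conjI allI impI)
    show "blocks_ok t I L G (\<Union>i<length Gs. BB i)" using c.combine1 G(2) by simp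
    fix f assume fk: "fok t G (\<Union>i<length Gs. BB i) f"
    then have fk': "fok t (seq_list Gs) (\<Union>i<length Gs. BB i) f" using G(2) by simp
    have each: "\<forall>i<Suc j. (R i, absG f (Gs ! i)) \<in> sem t p \<and> conv f (Gs ! i)"
      using BB c.combine_fok[OF fk'] G(3) by auto
    define Gs' where "Gs' = map (absG f) Gs"
    have ab: "absG f G = seq_list Gs'" using c.combine_abs[OF fk'] G(2) Gs'_def by simp
    have l: "length Gs' = Suc j" using G(3) Gs'_def by simp
    have a1: "\<forall>i<j. \<exists>u. ((u, 0), Gs' ! i) \<in> sem t p"
    proof (intro allI impI)
      fix i assume "i < j"
      have "(R i, absG f (Gs ! i)) \<in> sem t p" using each \<open>i < j\<close> by simp
      then have "(R i, Gs' ! i) \<in> sem t p" using Gs'_def G(3) \<open>i < j\<close> by simp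
      moreover have "snd (R i) = 0" using \<open>i < j\<close> R_def by simp
      ultimately have "(R i, Gs' ! i) \<in> sem t p" "snd (R i) = 0" by auto
      then show "\<exists>u. ((u, 0), Gs' ! i) \<in> sem t p" by (metis prod.collapse)
    qed
    have "(R j, absG f (Gs ! j)) \<in> sem t p" using each by simp
    then have a2: "((v, Suc k), Gs' ! j) \<in> sem t p" using G(3) Gs'_def R_def by simp
    have a3: "\<forall>i<length Gs'. \<forall>i'<length Gs'. i \<noteq> i' \<longrightarrow> fst (Gs' ! i) \<inter> fst (Gs' ! i') = {}"
      using c.combine_disj[OF fk'] Gs'_def by simp
    show "(r, absG f G) \<in> sem t (Loop p)"
      unfolding ab G(1) sem.simps using l a1 a2 a3 by blast
    show "conv f G" using c.combine_conv[OF fk'] each G(2,3) by simp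
  qed
qed


lemma pe_iff: "plain_exec T (E, R) \<longleftrightarrow> (\<forall>e\<in>E. thread e \<in> {1..T}) \<and> R \<subseteq> E \<times> E \<and>
   (\<forall>(a,b)\<in>R. thread a = thread b) \<and> trans R \<and> (\<forall>x. (x,x) \<notin> R) \<and>
   (\<forall>x\<in>E. \<forall>y\<in>E. thread x = thread y \<longrightarrow> x \<noteq> y \<longrightarrow> (x,y) \<in> R \<or> (y,x) \<in> R)"
proof
  assume pe: "plain_exec T (E, R)"
  then have A: "\<forall>e\<in>E. thread e \<in> {1..T}" "R \<subseteq> E \<times> E" "\<forall>(a,b)\<in>R. thread a = thread b"
    unfolding plain_exec_def by simp_all
  have tx: "\<And>a b. (a,b) \<in> R \<Longrightarrow> thread a = thread b" using A(3) by blast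
  from pe have B0: "\<forall>t. trans (R \<inter> ({e\<in>E. thread e = t} \<times> {e\<in>E. thread e = t})) \<and>
             irrefl (R \<inter> ({e\<in>E. thread e = t} \<times> {e\<in>E. thread e = t})) \<and>
             total_on {e\<in>E. thread e = t} (R \<inter> ({e\<in>E. thread e = t} \<times> {e\<in>E. thread e = t}))"
    unfolding plain_exec_def Let_def fst_conv snd_conv by (elim conjE)
  have Bt: "\<And>t. trans (R \<inter> ({e\<in>E. thread e = t} \<times> {e\<in>E. thread e = t}))"
    using B0 by blast
  have Bi: "\<And>t. irrefl (R \<inter> ({e\<in>E. thread e = t} \<times> {e\<in>E. thread e = t}))"
    using B0 by blast
  have Bo: "\<And>t. total_on {e\<in>E. thread e = t} (R \<inter> ({e\<in>E. thread e = t} \<times> {e\<in>E. thread e = t}))"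
    using B0 by blast
  have tr: "trans R"
  proof (rule transI)
    fix x y z assume xy: "(x,y) \<in> R" and yz: "(y,z) \<in> R"
    let ?Et = "{e\<in>E. thread e = thread x}"
    have "x \<in> E" "y \<in> E" "z \<in> E" using xy yz A(2) by auto
    moreover have "thread y = thread x" "thread z = thread x" using tx[OF xy] tx[OF yz] by simp_all
    ultimately have "(x,y) \<in> R \<inter> ?Et \<times> ?Et" "(y,z) \<in> R \<inter> ?Et \<times> ?Et" using xy yz by auto
    then have "(x,z) \<in> R \<inter> ?Et \<times> ?Et" using transD[OF Bt[of "thread x"]] by blast
    then show "(x,z) \<in> R" by simp
  qed
  have ir: "\<forall>x. (x,x) \<notin> R"
  proof (intro allI notI)
    fix x assume xx: "(x,x) \<in> R"
    let ?Et = "{e\<in>E. thread e = thread x}"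
    have "x \<in> E" using xx A(2) by auto
    then have "(x,x) \<in> R \<inter> ?Et \<times> ?Et" using xx by simp
    then show False using irreflD[OF Bi[of "thread x"]] by blast
  qed
  have to: "\<forall>x\<in>E. \<forall>y\<in>E. thread x = thread y \<longrightarrow> x \<noteq> y \<longrightarrow> (x,y) \<in> R \<or> (y,x) \<in> R"
  proof (intro ballI impI)
    fix x y assume h: "x \<in> E" "y \<in> E" "thread x = thread y" "x \<noteq> y"
    let ?Et = "{e\<in>E. thread e = thread x}"
    have "x \<in> ?Et" "y \<in> ?Et" using h by auto
    then have "(x,y) \<in> R \<inter> ?Et \<times> ?Et \<or> (y,x) \<in> R \<inter> ?Et \<times> ?Et"
      using Bo[of "thread x"] h(4) unfolding total_on_def by blast
    then show "(x,y) \<in> R \<or> (y,x) \<in> R" by blast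
  qed
  show "(\<forall>e\<in>E. thread e \<in> {1..T}) \<and> R \<subseteq> E \<times> E \<and>
   (\<forall>(a,b)\<in>R. thread a = thread b) \<and> trans R \<and> (\<forall>x. (x,x) \<notin> R) \<and>
   (\<forall>x\<in>E. \<forall>y\<in>E. thread x = thread y \<longrightarrow> x \<noteq> y \<longrightarrow> (x,y) \<in> R \<or> (y,x) \<in> R)"
    using A tr ir to by (intro conjI)
next
  assume h: "(\<forall>e\<in>E. thread e \<in> {1..T}) \<and> R \<subseteq> E \<times> E \<and>
   (\<forall>(a,b)\<in>R. thread a = thread b) \<and> trans R \<and> (\<forall>x. (x,x) \<notin> R) \<and>
   (\<forall>x\<in>E. \<forall>y\<in>E. thread x = thread y \<longrightarrow> x \<noteq> y \<longrightarrow> (x,y) \<in> R \<or> (y,x) \<in> R)"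
  then have h1: "\<forall>e\<in>E. thread e \<in> {1..T}" "R \<subseteq> E \<times> E" "\<forall>(a,b)\<in>R. thread a = thread b"
    "trans R" "\<forall>x. (x,x) \<notin> R"
    "\<forall>x\<in>E. \<forall>y\<in>E. thread x = thread y \<longrightarrow> x \<noteq> y \<longrightarrow> (x,y) \<in> R \<or> (y,x) \<in> R" by simp_all
  show "plain_exec T (E, R)"
    unfolding plain_exec_def Let_def fst_conv snd_conv
  proof (intro conjI allI)
    show "\<forall>e\<in>E. thread e \<in> {1..T}" by (fact h1(1))
    show "R \<subseteq> E \<times> E" by (fact h1(2))
    show "\<forall>(a,b)\<in>R. thread a = thread b" by (fact h1(3))
    fix t
    show "trans (R \<inter> {e \<in> E. thread e = t} \<times> {e \<in> E. thread e = t})"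
    proof (rule transI)
      fix x y z assume "(x,y) \<in> R \<inter> {e \<in> E. thread e = t} \<times> {e \<in> E. thread e = t}"
        "(y,z) \<in> R \<inter> {e \<in> E. thread e = t} \<times> {e \<in> E. thread e = t}"
      moreover have "(x,z) \<in> R" using calculation h1(4) by (meson IntD1 transD)
      ultimately show "(x,z) \<in> R \<inter> {e \<in> E. thread e = t} \<times> {e \<in> E. thread e = t}" by simp
    qed
    show "irrefl (R \<inter> {e \<in> E. thread e = t} \<times> {e \<in> E. thread e = t})"
    proof (rule irreflI)
      fix a show "(a, a) \<notin> R \<inter> {e \<in> E. thread e = t} \<times> {e \<in> E. thread e = t}" using h1(5) by blast
    qed
    show "total_on {e \<in> E. thread e = t} (R \<inter> {e \<in> E. thread e = t} \<times> {e \<in> E. thread e = t})"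
    proof (rule total_onI)
      fix x y assume "x \<in> {e \<in> E. thread e = t}" "y \<in> {e \<in> E. thread e = t}" "x \<noteq> y"
      then show "(x, y) \<in> R \<inter> {e \<in> E. thread e = t} \<times> {e \<in> E. thread e = t} \<or>
          (y, x) \<in> R \<inter> {e \<in> E. thread e = t} \<times> {e \<in> E. thread e = t}" using h1(6) by auto
    qed
  qed
qed

lemma pe_restrict:
  assumes pe: "plain_exec T (E, R)" shows "plain_exec T (E \<inter> A, R \<inter> A \<times> A)"
proof -
  from pe have h1: "\<forall>e\<in>E. thread e \<in> {1..T}" "R \<subseteq> E \<times> E" "\<forall>(a,b)\<in>R. thread a = thread b"
    "trans R" "\<forall>x. (x,x) \<notin> R"
    "\<forall>x\<in>E. \<forall>y\<in>E. thread x = thread y \<longrightarrow> x \<noteq> y \<longrightarrow> (x,y) \<in> R \<or> (y,x) \<in> R"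
    unfolding pe_iff by simp_all
  have tr: "trans (R \<inter> A \<times> A)"
  proof (rule transI)
    fix x y z assume a: "(x,y) \<in> R \<inter> A \<times> A" "(y,z) \<in> R \<inter> A \<times> A"
    then have "(x,z) \<in> R" using transD[OF h1(4)] by blast
    then show "(x,z) \<in> R \<inter> A \<times> A" using a by blast
  qed
  show ?thesis unfolding pe_iff
  proof (intro conjI)
    show "\<forall>e\<in>E \<inter> A. thread e \<in> {1..T}" using h1(1) by blast
    show "R \<inter> A \<times> A \<subseteq> (E \<inter> A) \<times> (E \<inter> A)" using h1(2) by blast
    show "\<forall>(a,b)\<in>R \<inter> A \<times> A. thread a = thread b" using h1(3) by blast
    show "trans (R \<inter> A \<times> A)" by fact
    show "\<forall>x. (x,x) \<notin> R \<inter> A \<times> A" using h1(5) by blast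
    show "\<forall>x\<in>E \<inter> A. \<forall>y\<in>E \<inter> A. thread x = thread y \<longrightarrow> x \<noteq> y \<longrightarrow> (x,y) \<in> R \<inter> A \<times> A \<or> (y,x) \<in> R \<inter> A \<times> A"
      using h1(6) by blast
  qed
qed

lemma quotE: "(a,b) \<in> quot f R \<Longrightarrow> (\<And>x y. a = f x \<Longrightarrow> b = f y \<Longrightarrow> (x,y) \<in> R \<Longrightarrow> f x \<noteq> f y \<Longrightarrow> P) \<Longrightarrow> P"
  unfolding quot_def by blast

lemma quotI: "(x,y) \<in> R \<Longrightarrow> f x \<noteq> f y \<Longrightarrow> (f x, f y) \<in> quot f R"
  unfolding quot_def by blast

lemma pe_quot:
  assumes pe: "plain_exec T (E, R)" and th: "\<forall>x\<in>E. thread (f x) = thread x"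
    and cv: "conv f (E, R)"
  shows "plain_exec T (f ` E, quot f R)"
proof -
  from pe have A: "\<forall>e\<in>E. thread e \<in> {1..T}" "R \<subseteq> E \<times> E" "\<forall>(a,b)\<in>R. thread a = thread b"
    "trans R" "\<forall>x. (x,x) \<notin> R" "\<forall>x\<in>E. \<forall>y\<in>E. thread x = thread y \<longrightarrow> x \<noteq> y \<longrightarrow> (x,y) \<in> R \<or> (y,x) \<in> R"
    unfolding pe_iff by simp_all
  have tx: "\<And>a b. (a,b) \<in> R \<Longrightarrow> thread a = thread b" using A(3) by blast
  have inE: "\<And>a b. (a,b) \<in> R \<Longrightarrow> a \<in> E \<and> b \<in> E" using A(2) by blast
  from cv have C0: "\<forall>(x,y)\<in>R. f x \<noteq> f y \<longrightarrow> (\<forall>x'\<in>E. \<forall>y'\<in>E. f x' = f x \<longrightarrow> f y' = f y \<longrightarrow> (x', y') \<in> R)"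
    unfolding conv_def by simp
  have C: "\<And>x y x' y'. (x,y) \<in> R \<Longrightarrow> f x \<noteq> f y \<Longrightarrow> x' \<in> E \<Longrightarrow> y' \<in> E \<Longrightarrow> f x' = f x \<Longrightarrow> f y' = f y
       \<Longrightarrow> (x', y') \<in> R"
  proof -
    fix x y x' y' assume a: "(x,y) \<in> R" "f x \<noteq> f y" "x' \<in> E" "y' \<in> E" "f x' = f x" "f y' = f y"
    have "\<forall>x'\<in>E. \<forall>y'\<in>E. f x' = f x \<longrightarrow> f y' = f y \<longrightarrow> (x', y') \<in> R" using C0 a(1,2) by blast
    then show "(x', y') \<in> R" using a by blast
  qed
  have t1: "\<forall>e\<in>f ` E. thread e \<in> {1..T}" using A(1) th by auto
  have t2: "quot f R \<subseteq> f ` E \<times> f ` E"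
  proof
    fix z assume "z \<in> quot f R"
    then obtain a b where z: "z = (a,b)" "(a,b) \<in> quot f R" by (cases z) auto
    from z(2) show "z \<in> f ` E \<times> f ` E" by (rule quotE) (use inE z(1) in auto)
  qed
  have t3: "\<forall>(a,b)\<in>quot f R. thread a = thread b"
  proof (clarify)
    fix a b assume "(a,b) \<in> quot f R"
    then show "thread a = thread b"
    proof (rule quotE)
      fix x y assume "a = f x" "b = f y" "(x,y) \<in> R"
      then show "thread a = thread b" using th inE[of x y] tx[of x y] by simp
    qed
  qed
  have t4: "trans (quot f R)"
  proof (rule transI)
    fix a b c assume ab: "(a,b) \<in> quot f R" and bc: "(b,c) \<in> quot f R"
    from ab obtain x y where xy: "a = f x" "b = f y" "(x,y) \<in> R" "f x \<noteq> f y" by (rule quotE)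
    from bc obtain y' z where yz: "b = f y'" "c = f z" "(y',z) \<in> R" "f y' \<noteq> f z" by (rule quotE)
    have E: "x \<in> E" "y \<in> E" "y' \<in> E" "z \<in> E" using inE xy(3) yz(3) by auto
    have xy': "(x, y') \<in> R" using C[OF xy(3) xy(4) E(1) E(3)] xy yz by simp
    have xz: "(x, z) \<in> R" using transD[OF A(4) xy' yz(3)] .
    have "f x \<noteq> f z"
    proof
      assume eq: "f x = f z"
      have "(y', x) \<in> R" using C[OF yz(3) yz(4) E(3) E(1)] eq by simp
      then have "(x, x) \<in> R" using transD[OF A(4) xy'] by blast
      then show False using A(5) by blast
    qed
    then show "(a, c) \<in> quot f R" using quotI[OF xz] xy yz by simp
  qed
  have t5: "\<forall>x. (x,x) \<notin> quot f R" by (auto elim: quotE)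
  have t6: "\<forall>a\<in>f ` E. \<forall>b\<in>f ` E. thread a = thread b \<longrightarrow> a \<noteq> b \<longrightarrow> (a,b) \<in> quot f R \<or> (b,a) \<in> quot f R"
  proof (intro ballI impI)
    fix a b assume ab: "a \<in> f ` E" "b \<in> f ` E" "thread a = thread b" "a \<noteq> b"
    then obtain x y where xy: "x \<in> E" "y \<in> E" "a = f x" "b = f y" by blast
    then have "thread x = thread y" "x \<noteq> y" using th ab by auto
    then have "(x,y) \<in> R \<or> (y,x) \<in> R" using A(6) xy by blast
    then show "(a,b) \<in> quot f R \<or> (b,a) \<in> quot f R" using quotI xy ab(4) by metis
  qed
  show ?thesis unfolding pe_iff using t1 t2 t3 t4 t5 t6 by (intro conjI)
qed

lemma restrict_restrict: "restrict_exec (restrict_exec X A) B = restrict_exec X (A \<inter> B)"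
  unfolding restrict_exec_def by (simp add: Int_assoc) (auto simp: fun_eq_iff)

lemma restrict_cong:
  assumes "ev X \<inter> D = ev Y \<inter> D" "po X \<inter> D \<times> D = po Y \<inter> D \<times> D" "\<forall>e\<in>D. stmp X e = stmp Y e"
    "so X \<inter> {(x, y). fst x \<in> D \<and> fst y \<in> D} = so Y \<inter> {(x, y). fst x \<in> D \<and> fst y \<in> D}"
    "hb X \<inter> {(x, y). fst x \<in> D \<and> fst y \<in> D} = hb Y \<inter> {(x, y). fst x \<in> D \<and> fst y \<in> D}"
  shows "restrict_exec X D = restrict_exec Y D"
proof -
  have "(\<lambda>e. if e \<in> D then stmp X e else {}) = (\<lambda>e. if e \<in> D then stmp Y e else {})"
    using assms(3) by (simp add: fun_eq_iff)
  then show ?thesis using assms unfolding restrict_exec_def by simp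
qed


lemma quot_UN: "quot f (\<Union>i\<in>S. R i) = (\<Union>i\<in>S. quot f (R i))"
  unfolding quot_def by blast

locale ctx =
  fixes T :: nat and to :: "('s \<times> 's) set"
    and \<Lambda> :: "('v, 'm, 's) library set" and L :: "('v, 'm, 's) library"
    and I :: "('v, 'm) impl" and ps :: "('v, 'm) prog list" and vs :: "'v list"
    and X :: "('v, 'm, 's) execution" and Gs :: "('v, 'm) pexec list"
    and BB :: "nat \<Rightarrow> (('v,'m) event set \<times> ('v,'m) lab) set" and \<nu> :: "(('v,'m) event set \<times> ('v,'m) lab) \<Rightarrow> nat"
  assumes libs: "\<forall>Lb\<in>insert L \<Lambda>. is_library T to Lb"
    and notin: "L \<notin> \<Lambda>"
    and compat: "\<forall>Lb\<in>\<Lambda>. compatible L Lb"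
    and wd: "well_defined T I L \<Lambda>"
    and ls: "locally_sound T to I L \<Lambda>"
    and len: "length ps = T"
    and locdisj: "loc_impl T (insert L \<Lambda>) I L \<inter> loc_prog (insert L \<Lambda>) ps = {}"
    and cons: "consistent T to \<Lambda> X"
    and lenG: "length Gs = T" and lenv: "length vs = T"
    and semG: "\<forall>i<T. ((vs!i, 0), Gs!i) \<in> sem (Suc i) (transl I L (Suc i) (ps!i))"
    and evX: "ev X = (\<Union>i<T. fst (Gs!i))" and poX: "po X = (\<Union>i<T. snd (Gs!i))"
    and BBp: "\<forall>i<T. blocks_ok (Suc i) I L (Gs!i) (BB i) \<and>
         (\<forall>f. fok (Suc i) (Gs!i) (BB i) f \<longrightarrow> ((vs!i, 0), absG f (Gs!i)) \<in> sem (Suc i) (ps!i) \<and> conv f (Gs!i))"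
    and nu: "inj_on \<nu> (\<Union>i<T. BB i)"
begin

definition "B = (\<Union>i<T. BB i)"
definition "inB x = (\<exists>b\<in>B. x \<in> fst b)"
definition "blk x = (SOME b. b \<in> B \<and> x \<in> fst b)"
definition "fa x = (if inB x then (fst x, \<nu> (blk x), snd (blk x)) else x)"
definition "Eimpl = {x \<in> ev X. inB x}"
definition "C = {x \<in> ev X. \<not> inB x}"
definition "E' = fa ` Eimpl"

lemma wfGs: "i < T \<Longrightarrow> wfG (Suc i) (Gs!i)"
  using semG sem_wfG by blast

lemma thread_idx: "i < T \<Longrightarrow> x \<in> fst (Gs!i) \<Longrightarrow> fst x = Suc i"
  using wfGs unfolding wfG_def by blast

lemma idx_unique: "i < T \<Longrightarrow> j < T \<Longrightarrow> x \<in> fst (Gs!i) \<Longrightarrow> x \<in> fst (Gs!j) \<Longrightarrow> i = j"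
proof -
  assume a: "i < T" "j < T" "x \<in> fst (Gs!i)" "x \<in> fst (Gs!j)"
  have "fst x = Suc i" using thread_idx a(1,3) .
  moreover have "fst x = Suc j" using thread_idx a(2,4) .
  ultimately show "i = j" by simp
qed

lemma bo: "i < T \<Longrightarrow> blocks_ok (Suc i) I L (Gs!i) (BB i)"
  using BBp by blast

lemma blk_sub: "i < T \<Longrightarrow> b \<in> BB i \<Longrightarrow> fst b \<subseteq> fst (Gs!i)"
  using bo unfolding blocks_ok_def by blast

lemma blk_unique: "i < T \<Longrightarrow> b \<in> BB i \<Longrightarrow> x \<in> fst b \<Longrightarrow> b' \<in> B \<Longrightarrow> x \<in> fst b' \<Longrightarrow> b' = b"
proof -
  assume a: "i < T" "b \<in> BB i" "x \<in> fst b" "b' \<in> B" "x \<in> fst b'"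
  then obtain j where j: "j < T" "b' \<in> BB j" unfolding B_def by blast
  have "x \<in> fst (Gs!i)" "x \<in> fst (Gs!j)" using blk_sub a j by blast+
  then have "j = i" using idx_unique a j by blast
  then show "b' = b" using bo[OF a(1)] a j unfolding blocks_ok_def by blast
qed

lemma blk_eq: "i < T \<Longrightarrow> b \<in> BB i \<Longrightarrow> x \<in> fst b \<Longrightarrow> blk x = b"
proof -
  assume a: "i < T" "b \<in> BB i" "x \<in> fst b"
  have "b \<in> B \<and> x \<in> fst b" using a unfolding B_def by blast
  then have "blk x \<in> B \<and> x \<in> fst (blk x)" unfolding blk_def by (rule someI)
  then show "blk x = b" using blk_unique a by blast
qed

lemma f_blk: "i < T \<Longrightarrow> b \<in> BB i \<Longrightarrow> x \<in> fst b \<Longrightarrow> fa x = (Suc i, \<nu> b, snd b)"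
proof -
  assume a: "i < T" "b \<in> BB i" "x \<in> fst b"
  have "inB x" using a unfolding inB_def B_def by blast
  moreover have "fst x = Suc i" using thread_idx blk_sub a by blast
  ultimately show ?thesis using blk_eq[OF a] unfolding fa_def by simp
qed

lemma inB_E: "inB x \<Longrightarrow> (\<And>i b. i < T \<Longrightarrow> b \<in> BB i \<Longrightarrow> x \<in> fst b \<Longrightarrow> P) \<Longrightarrow> P"
  unfolding inB_def B_def by blast

lemma f_cl: "\<not> inB x \<Longrightarrow> fa x = x"
  unfolding fa_def by simp

lemma meth_X: "x \<in> ev X \<Longrightarrow> meth x \<notin> lM L"
proof -
  assume x: "x \<in> ev X"
  have "ev X = (\<Union>Lb\<in>\<Lambda>. evs_of Lb (ev X))" using cons unfolding consistent_def by blast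
  then obtain Lb where "Lb \<in> \<Lambda>" "meth x \<in> lM Lb" using x unfolding evs_of_def by blast
  then show ?thesis using compat unfolding compatible_def by blast
qed

lemma meth_lab: "meth (a, b, l) = fst l"
  by (simp add: meth_def)

lemma meth_blk: "inB x \<Longrightarrow> meth (fa x) \<in> lM L"
proof -
  assume "inB x"
  then obtain i b where a: "i < T" "b \<in> BB i" "x \<in> fst b" by (rule inB_E)
  then have "fst (snd b) \<in> lM L" using bo unfolding blocks_ok_def by blast
  then show ?thesis using f_blk[OF a] by (simp add: meth_lab)
qed

lemma f_inj: "x \<in> ev X \<Longrightarrow> y \<in> ev X \<Longrightarrow> fa x = fa y \<Longrightarrow> x = y \<or> (\<exists>b\<in>B. x \<in> fst b \<and> y \<in> fst b)"
proof -
  assume a: "x \<in> ev X" "y \<in> ev X" "fa x = fa y"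
  show ?thesis
  proof (cases "inB x")
    case True
    then obtain i b where b: "i < T" "b \<in> BB i" "x \<in> fst b" by (rule inB_E)
    show ?thesis
    proof (cases "inB y")
      case True
      then obtain j b' where b': "j < T" "b' \<in> BB j" "y \<in> fst b'" by (rule inB_E)
      have "\<nu> b = \<nu> b'" using f_blk[OF b] f_blk[OF b'] a(3) by simp
      then have "b = b'" using nu b b' unfolding inj_on_def by blast
      then show ?thesis using b b' unfolding B_def by blast
    next
      case False
      then have "fa y = y" by (rule f_cl)
      then have "meth y \<in> lM L" using meth_blk[OF \<open>inB x\<close>] a(3) by simp
      then show ?thesis using meth_X a(2) by blast
    qed
  next
    case False
    then have fx: "fa x = x" by (rule f_cl)
    show ?thesis
    proof (cases "inB y")
      case True
      then have "meth x \<in> lM L" using meth_blk[OF True] a(3) fx by simp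
      then show ?thesis using meth_X a(1) by blast
    next
      case False
      then show ?thesis using fx f_cl a(3) by simp
    qed
  qed
qed

lemma inGs: "i < T \<Longrightarrow> x \<in> fst (Gs!i) \<Longrightarrow> x \<in> ev X"
  using evX by blast

lemma fok_i: "i < T \<Longrightarrow> fok (Suc i) (Gs!i) (BB i) fa"
  unfolding fok_def
proof (intro conjI ballI impI)
  assume i: "i < T"
  fix b assume "b \<in> BB i"
  then show "\<exists>\<iota>. \<forall>x\<in>fst b. fa x = (Suc i, \<iota>, snd b)" using f_blk i by blast
next
  assume i: "i < T"
  fix x assume x: "x \<in> fst (Gs!i)" "\<forall>b\<in>BB i. x \<notin> fst b"
  have "\<not> inB x"
  proof
    assume "inB x"
    then obtain j b where b: "j < T" "b \<in> BB j" "x \<in> fst b" by (rule inB_E)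
    then have "j = i" using blk_sub idx_unique x i by blast
    then show False using b x by blast
  qed
  then show "fa x = x" by (rule f_cl)
next
  assume i: "i < T"
  fix x y assume xy: "x \<in> fst (Gs!i)" "y \<in> fst (Gs!i)" "fa x = fa y"
  then have "x = y \<or> (\<exists>b\<in>B. x \<in> fst b \<and> y \<in> fst b)" using f_inj inGs i by blast
  then show "x = y \<or> (\<exists>b\<in>BB i. x \<in> fst b \<and> y \<in> fst b)"
  proof
    assume "\<exists>b\<in>B. x \<in> fst b \<and> y \<in> fst b"
    then obtain j b where b: "j < T" "b \<in> BB j" "x \<in> fst b" "y \<in> fst b" unfolding B_def by blast
    then have "j = i" using blk_sub idx_unique xy i by blast
    then show ?thesis using b by blast
  qed simp
qed

lemma abs_i: "i < T \<Longrightarrow> ((vs!i, 0), absG fa (Gs!i)) \<in> sem (Suc i) (ps!i) \<and> conv fa (Gs!i)"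
  using BBp fok_i by blast

lemma sem_abs: "(vs, (fa ` ev X, quot fa (po X))) \<in> sem_conc ps"
proof -
  define Gs' where "Gs' = map (\<lambda>i. absG fa (Gs!i)) [0..<T]"
  have l: "length Gs' = T" using Gs'_def by simp
  have n: "\<And>i. i < T \<Longrightarrow> Gs'!i = absG fa (Gs!i)" using Gs'_def by simp
  have e1: "fa ` ev X = (\<Union>i<length ps. fst (Gs'!i))"
    unfolding evX len using n by (auto simp: absG_def)
  have e2: "quot fa (po X) = (\<Union>i<length ps. snd (Gs'!i))"
    unfolding poX len quot_UN using n by (simp add: absG_def)
  have s: "\<forall>i<length ps. ((vs ! i, 0), Gs' ! i) \<in> sem (Suc i) (ps ! i)"
    using abs_i n len by simp
  show ?thesis unfolding sem_conc_def e1 e2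
    apply (simp only: mem_Collect_eq)
    apply (rule exI[of _ vs], rule exI[of _ Gs'])
    using l s len lenv by simp
qed

lemma thread_f: "x \<in> ev X \<Longrightarrow> thread (fa x) = thread x"
proof (cases "inB x")
  case True
  then show ?thesis unfolding fa_def thread_def by simp
next
  case False
  then show ?thesis using f_cl by simp
qed

lemma conv_glob0: "(x,y) \<in> po X \<Longrightarrow> fa x \<noteq> fa y \<Longrightarrow> x' \<in> ev X \<Longrightarrow> y' \<in> ev X \<Longrightarrow>
   fa x' = fa x \<Longrightarrow> fa y' = fa y \<Longrightarrow> (x', y') \<in> po X"
proof -
  assume a: "(x,y) \<in> po X" "fa x \<noteq> fa y" "x' \<in> ev X" "y' \<in> ev X"
    "fa x' = fa x" "fa y' = fa y"
  from a(1) obtain i where i: "i < T" "(x,y) \<in> snd (Gs!i)" using poX by blast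
  have xy: "x \<in> fst (Gs!i)" "y \<in> fst (Gs!i)" using wfGs[OF i(1)] i(2) unfolding wfG_def by auto
  have tx: "fst x' = Suc i" "fst y' = Suc i"
    using thread_f[OF a(3)] thread_f[OF a(4)] a(5,6) thread_f[OF inGs[OF i(1) xy(1)]]
      thread_f[OF inGs[OF i(1) xy(2)]] thread_idx[OF i(1)] xy unfolding thread_def by auto
  obtain j where j: "j < T" "x' \<in> fst (Gs!j)" using a(3) evX by blast
  obtain k where k: "k < T" "y' \<in> fst (Gs!k)" using a(4) evX by blast
  have "j = i" using thread_idx[OF j] tx by simp
  moreover have "k = i" using thread_idx[OF k] tx by simp
  ultimately have "x' \<in> fst (Gs!i)" "y' \<in> fst (Gs!i)" using j k by auto
  then have "(x', y') \<in> snd (Gs!i)" using abs_i[OF i(1)] i(2) a xy unfolding conv_def by blast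
  then show "(x', y') \<in> po X" using poX i by blast
qed

lemma conv_glob: "conv fa (ev X, po X)"
  unfolding conv_def fst_conv snd_conv using conv_glob0 by blast

lemma wfX: "wf_exec T X" using cons unfolding consistent_def by blast

lemma peX: "plain_exec T (ev X, po X)" using wfX unfolding wf_exec_def by blast

lemma pe_abs: "plain_exec T (fa ` ev X, quot fa (po X))"
  using pe_quot[OF peX _ conv_glob] thread_f by blast

lemma poX_sub: "po X \<subseteq> ev X \<times> ev X" using peX unfolding plain_exec_def by simp

lemma po_back: "x \<in> ev X \<Longrightarrow> y \<in> ev X \<Longrightarrow> (fa x, fa y) \<in> quot fa (po X) \<Longrightarrow> (x, y) \<in> po X"
proof -
  assume a: "x \<in> ev X" "y \<in> ev X" "(fa x, fa y) \<in> quot fa (po X)"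
  from a(3) obtain x0 y0 where b: "fa x = fa x0" "fa y = fa y0" "(x0,y0) \<in> po X" "fa x0 \<noteq> fa y0"
    by (rule quotE)
  then show "(x,y) \<in> po X" using conv_glob a unfolding conv_def by fastforce
qed

lemma Eimpl_sub: "Eimpl \<subseteq> ev X" unfolding Eimpl_def by blast
lemma C_sub: "C \<subseteq> ev X" unfolding C_def by blast
lemma evX_split: "ev X = C \<union> Eimpl" "C \<inter> Eimpl = {}" unfolding C_def Eimpl_def by auto

lemma fa_C: "x \<in> C \<Longrightarrow> fa x = x" unfolding C_def using f_cl by blast

lemma E'_meth: "e \<in> E' \<Longrightarrow> meth e \<in> lM L"
  unfolding E'_def Eimpl_def using meth_blk by blast

lemma C_meth: "e \<in> C \<Longrightarrow> meth e \<notin> lM L"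
  using meth_X C_sub by blast

lemma CE'_disj: "C \<inter> E' = {}" using E'_meth C_meth by blast

lemma fa_evX: "fa ` ev X = C \<union> E'"
proof -
  have "fa ` ev X = fa ` C \<union> fa ` Eimpl" using evX_split(1) by (metis image_Un)
  moreover have "fa ` C = C" using fa_C by (simp add: image_cong[OF refl fa_C])
  ultimately show ?thesis unfolding E'_def by simp
qed

lemma fa_E'_iff: "x \<in> ev X \<Longrightarrow> fa x \<in> E' \<longleftrightarrow> x \<in> Eimpl"
proof -
  assume x: "x \<in> ev X"
  show ?thesis
  proof
    assume "fa x \<in> E'"
    then have "meth (fa x) \<in> lM L" by (rule E'_meth)
    then have "inB x" using f_cl meth_X x by metis
    then show "x \<in> Eimpl" using x unfolding Eimpl_def by blast
  next
    assume "x \<in> Eimpl" then show "fa x \<in> E'" unfolding E'_def by blast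
  qed
qed

end


lemma restrict_simps[simp]:
  "ev (restrict_exec X A) = ev X \<inter> A"
  "po (restrict_exec X A) = po X \<inter> A \<times> A"
  "stmp (restrict_exec X A) = (\<lambda>e. if e \<in> A then stmp X e else {})"
  "so (restrict_exec X A) = so X \<inter> {(x, y). fst x \<in> A \<and> fst y \<in> A}"
  "hb (restrict_exec X A) = hb X \<inter> {(x, y). fst x \<in> A \<and> fst y \<in> A}"
  by (simp_all add: restrict_exec_def)

lemma evs_of_Int: "evs_of Lb (A \<inter> B) = evs_of Lb A \<inter> B"
  unfolding evs_of_def by blast

lemma trans_pairs: "trans {(x, y). fst x \<in> A \<and> fst y \<in> A}"
  by (rule transI) simp

context ctx
begin

lemma loc_C: "e \<in> C \<Longrightarrow> Lb \<in> \<Lambda> \<Longrightarrow> meth e \<in> lM Lb \<Longrightarrow> lloc Lb e \<subseteq> loc_prog (insert L \<Lambda>) ps"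
proof -
  assume a: "e \<in> C" "Lb \<in> \<Lambda>" "meth e \<in> lM Lb"
  have 1: "lloc Lb e \<subseteq> loc_ev (insert L \<Lambda>) e" unfolding loc_ev_def using a(2,3) by blast
  have "e \<in> fa ` ev X" using fa_evX a(1) by blast
  then have 2: "loc_ev (insert L \<Lambda>) e \<subseteq> locs (insert L \<Lambda>) (fa ` ev X)" unfolding locs_def by blast
  have "locs (insert L \<Lambda>) (fst (fa ` ev X, quot fa (po X))) \<in>
      {locs (insert L \<Lambda>) (fst G) | vs G. (vs, G) \<in> sem_conc ps}"
    using sem_abs by blast
  then have 3: "locs (insert L \<Lambda>) (fa ` ev X) \<subseteq> loc_prog (insert L \<Lambda>) ps"
    unfolding loc_prog_def by (simp add: Sup_upper)
  show ?thesis using 1 2 3 by blast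
qed

lemma loc_I: "e \<in> Eimpl \<Longrightarrow> Lb \<in> \<Lambda> \<Longrightarrow> meth e \<in> lM Lb \<Longrightarrow> lloc Lb e \<subseteq> loc_impl T (insert L \<Lambda>) I L"
proof -
  assume a: "e \<in> Eimpl" "Lb \<in> \<Lambda>" "meth e \<in> lM Lb"
  then have "inB e" unfolding Eimpl_def by blast
  then obtain i b where b: "i < T" "b \<in> BB i" "e \<in> fst b" by (rule inB_E)
  have bk: "fst (snd b) \<in> lM L" "((snd (snd (snd b)), 0), (fst b, snd (Gs!i) \<inter> fst b \<times> fst b))
      \<in> sem (Suc i) (I (Suc i) (fst (snd b)) (fst (snd (snd b))))"
    using bo[OF b(1)] b(2) unfolding blocks_ok_def by blast+
  have 1: "lloc Lb e \<subseteq> loc_ev (insert L \<Lambda>) e" unfolding loc_ev_def using a(2,3) by blast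
  have 2: "loc_ev (insert L \<Lambda>) e \<subseteq> locs (insert L \<Lambda>) (fst (fst b, snd (Gs!i) \<inter> fst b \<times> fst b))"
    unfolding locs_def using b(3) by auto
  have "Suc i \<in> {1..T}" using b(1) by simp
  then have "locs (insert L \<Lambda>) (fst (fst b, snd (Gs!i) \<inter> fst b \<times> fst b)) \<in>
     {locs (insert L \<Lambda>) (fst G) | t m vs r G. t \<in> {1..T} \<and> m \<in> lM L \<and> (r, G) \<in> sem t (I t m vs)}"
    using bk by blast
  then have 3: "locs (insert L \<Lambda>) (fst (fst b, snd (Gs!i) \<inter> fst b \<times> fst b)) \<subseteq> loc_impl T (insert L \<Lambda>) I L"
    unfolding loc_impl_def by (simp add: Sup_upper)
  show ?thesis using 1 2 3 by blast
qed

lemma dec: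
  assumes Lb: "Lb \<in> \<Lambda>"
  shows "restrict_exec X (evs_of Lb Eimpl) \<in> lC Lb" "restrict_exec X (evs_of Lb C) \<in> lC Lb"
proof -
  let ?RL = "restrict_lib X Lb"
  have RL: "?RL \<in> lC Lb" using cons Lb unfolding consistent_def by blast
  have isl: "is_library T to Lb" using libs Lb by blast
  then have D0: "\<forall>X\<in>lC Lb. \<forall>E1 E2. ev X = E1 \<union> E2 \<and> E1 \<inter> E2 = {} \<and> lib_locs Lb E1 \<inter> lib_locs Lb E2 = {}
          \<longrightarrow> restrict_exec X E1 \<in> lC Lb"
    unfolding is_library_def by (elim conjE)
  have D: "\<And>E1 E2. ev ?RL = E1 \<union> E2 \<Longrightarrow> E1 \<inter> E2 = {} \<Longrightarrow> lib_locs Lb E1 \<inter> lib_locs Lb E2 = {}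
          \<Longrightarrow> restrict_exec ?RL E1 \<in> lC Lb"
  proof -
    fix E1 E2 assume "ev ?RL = E1 \<union> E2" "E1 \<inter> E2 = {}" "lib_locs Lb E1 \<inter> lib_locs Lb E2 = {}"
    then show "restrict_exec ?RL E1 \<in> lC Lb" using D0[rule_format, OF RL, of E1 E2] by blast
  qed
  have evRL: "ev ?RL = evs_of Lb Eimpl \<union> evs_of Lb C"
    unfolding restrict_lib_def using evX_split(1) by (auto simp: evs_of_def)
  have dj: "evs_of Lb Eimpl \<inter> evs_of Lb C = {}" using evX_split(2) by (auto simp: evs_of_def)
  have l1: "lib_locs Lb (evs_of Lb Eimpl) \<subseteq> loc_impl T (insert L \<Lambda>) I L"
    unfolding lib_locs_def
  proof (rule UN_least)
    fix e assume "e \<in> evs_of Lb Eimpl"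
    then have "e \<in> Eimpl" "meth e \<in> lM Lb" unfolding evs_of_def by auto
    then show "lloc Lb e \<subseteq> loc_impl T (insert L \<Lambda>) I L" using loc_I Lb by blast
  qed
  have l2: "lib_locs Lb (evs_of Lb C) \<subseteq> loc_prog (insert L \<Lambda>) ps"
    unfolding lib_locs_def
  proof (rule UN_least)
    fix e assume "e \<in> evs_of Lb C"
    then have "e \<in> C" "meth e \<in> lM Lb" unfolding evs_of_def by auto
    then show "lloc Lb e \<subseteq> loc_prog (insert L \<Lambda>) ps" using loc_C Lb by blast
  qed
  have ld: "lib_locs Lb (evs_of Lb Eimpl) \<inter> lib_locs Lb (evs_of Lb C) = {}" using l1 l2 locdisj by blast
  have s1: "evs_of Lb (ev X) \<inter> evs_of Lb Eimpl = evs_of Lb Eimpl" using Eimpl_sub by (auto simp: evs_of_def)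
  have s2: "evs_of Lb (ev X) \<inter> evs_of Lb C = evs_of Lb C" using C_sub by (auto simp: evs_of_def)
  have r1: "restrict_exec ?RL (evs_of Lb Eimpl) = restrict_exec X (evs_of Lb Eimpl)"
    unfolding restrict_lib_def restrict_restrict s1 ..
  have r2: "restrict_exec ?RL (evs_of Lb C) = restrict_exec X (evs_of Lb C)"
    unfolding restrict_lib_def restrict_restrict s2 ..
  have evRL2: "ev ?RL = evs_of Lb C \<union> evs_of Lb Eimpl" using evRL by blast
  have dj2: "evs_of Lb C \<inter> evs_of Lb Eimpl = {}" using dj by blast
  have ld2: "lib_locs Lb (evs_of Lb C) \<inter> lib_locs Lb (evs_of Lb Eimpl) = {}" using ld by blast
  show "restrict_exec X (evs_of Lb Eimpl) \<in> lC Lb" using D[OF evRL dj ld] r1 by simp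
  show "restrict_exec X (evs_of Lb C) \<in> lC Lb" using D[OF evRL2 dj2 ld2] r2 by simp
qed

lemma consX: "wf_exec T X" "(ppo to X \<union> so X)\<^sup>+ \<subseteq> hb X" "irrefl (hb X)" "trans (hb X)"
  "ev X = (\<Union>Lb\<in>\<Lambda>. evs_of Lb (ev X))" "so X = (\<Union>Lb\<in>\<Lambda>. so (restrict_lib X Lb))"
  "\<forall>Lb\<in>\<Lambda>. restrict_lib X Lb \<in> lC Lb"
  using cons unfolding consistent_def by blast+

lemma wfXs: "\<forall>e\<in>ev X. stmp X e \<noteq> {}" "\<forall>e. e \<notin> ev X \<longrightarrow> stmp X e = {}"
  "so X \<subseteq> SEv X \<times> SEv X" "hb X \<subseteq> SEv X \<times> SEv X"
  using consX(1) unfolding wf_exec_def by blast+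

definition "XI = restrict_exec X Eimpl"
definition "PI = {(x::('v,'m) event \<times> 's, y::('v,'m) event \<times> 's). fst x \<in> Eimpl \<and> fst y \<in> Eimpl}"

lemma XI_simps: "ev XI = Eimpl" "po XI = po X \<inter> Eimpl \<times> Eimpl"
  "stmp XI = (\<lambda>e. if e \<in> Eimpl then stmp X e else {})" "so XI = so X \<inter> PI" "hb XI = hb X \<inter> PI"
  unfolding XI_def PI_def using Eimpl_sub by auto

lemma SEv_XI: "SEv XI = SEv X \<inter> {x. fst x \<in> Eimpl}"
  unfolding SEv_def XI_simps using Eimpl_sub by auto

lemma ppo_XI: "ppo to XI \<subseteq> ppo to X \<inter> PI"
  unfolding ppo_def XI_simps PI_def by auto

lemma rl_XI: "Lb \<in> \<Lambda> \<Longrightarrow> restrict_lib XI Lb = restrict_exec X (evs_of Lb Eimpl)"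
proof -
  have "Eimpl \<inter> evs_of Lb Eimpl = evs_of Lb Eimpl" by (auto simp: evs_of_def)
  then show "restrict_lib XI Lb = restrict_exec X (evs_of Lb Eimpl)"
    unfolding restrict_lib_def XI_simps(1) unfolding XI_def restrict_restrict by simp
qed

lemma cons_XI: "consistent T to \<Lambda> XI"
  unfolding consistent_def
proof (intro conjI)
  show "wf_exec T XI" unfolding wf_exec_def
  proof (intro conjI)
    show "plain_exec T (ev XI, po XI)" unfolding XI_simps using pe_restrict[OF peX, of Eimpl] Eimpl_sub
      by (simp add: Int_absorb1)
    show "\<forall>e\<in>ev XI. stmp XI e \<noteq> {}" unfolding XI_simps using wfXs(1) Eimpl_sub by auto
    show "\<forall>e. e \<notin> ev XI \<longrightarrow> stmp XI e = {}" unfolding XI_simps by auto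
    show "so XI \<subseteq> SEv XI \<times> SEv XI" unfolding SEv_XI XI_simps PI_def using wfXs(3) by auto
    show "hb XI \<subseteq> SEv XI \<times> SEv XI" unfolding SEv_XI XI_simps PI_def using wfXs(4) by auto
  qed
  show "(ppo to XI \<union> so XI)\<^sup>+ \<subseteq> hb XI"
  proof
    fix p assume p: "p \<in> (ppo to XI \<union> so XI)\<^sup>+"
    have sub1: "ppo to XI \<union> so XI \<subseteq> ppo to X \<union> so X" using ppo_XI XI_simps(4) by blast
    have sub2: "ppo to XI \<union> so XI \<subseteq> PI" using ppo_XI XI_simps(4) by blast
    have "p \<in> (ppo to X \<union> so X)\<^sup>+" using trancl_mono[OF p sub1] .
    then have h1: "p \<in> hb X" using consX(2) by blast
    have h2: "p \<in> PI\<^sup>+" using trancl_mono[OF p sub2] .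
    have tP: "trans PI" unfolding PI_def by (rule trans_pairs)
    have "p \<in> PI" using h2 tP by simp
    then show "p \<in> hb XI" using h1 unfolding XI_simps by blast
  qed
  show "irrefl (hb XI)" using consX(3) unfolding XI_simps irrefl_def by blast
  show "trans (hb XI)" unfolding XI_simps PI_def by (rule trans_Int[OF consX(4) trans_pairs])
  show "ev XI = (\<Union>Lb\<in>\<Lambda>. evs_of Lb (ev XI))"
  proof -
    have "Eimpl = (\<Union>Lb\<in>\<Lambda>. evs_of Lb (ev X)) \<inter> Eimpl" using consX(5) Eimpl_sub by blast
    also have "\<dots> = (\<Union>Lb\<in>\<Lambda>. evs_of Lb Eimpl)" using Eimpl_sub by (auto simp: evs_of_def)
    finally show ?thesis unfolding XI_simps .
  qed
  show "so XI = (\<Union>Lb\<in>\<Lambda>. so (restrict_lib XI Lb))"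
  proof
    show "so XI \<subseteq> (\<Union>Lb\<in>\<Lambda>. so (restrict_lib XI Lb))"
    proof
      fix z assume z: "z \<in> so XI"
      then have z1: "z \<in> so X" "z \<in> PI" unfolding XI_simps by auto
      then obtain Lb where Lb: "Lb \<in> \<Lambda>" "z \<in> so (restrict_lib X Lb)" using consX(6) by blast
      then have "fst (fst z) \<in> evs_of Lb (ev X)" "fst (snd z) \<in> evs_of Lb (ev X)"
        unfolding restrict_lib_def by auto
      then have "fst (fst z) \<in> evs_of Lb Eimpl" "fst (snd z) \<in> evs_of Lb Eimpl"
        using z1(2) unfolding PI_def evs_of_def by auto
      then have "z \<in> so (restrict_lib XI Lb)" unfolding rl_XI[OF Lb(1)] using z1(1) by (cases z) auto
      then show "z \<in> (\<Union>Lb\<in>\<Lambda>. so (restrict_lib XI Lb))" using Lb(1) by blast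
    qed
    show "(\<Union>Lb\<in>\<Lambda>. so (restrict_lib XI Lb)) \<subseteq> so XI"
    proof
      fix z assume "z \<in> (\<Union>Lb\<in>\<Lambda>. so (restrict_lib XI Lb))"
      then obtain Lb where "Lb \<in> \<Lambda>" "z \<in> so (restrict_lib XI Lb)" by blast
      then show "z \<in> so XI" unfolding restrict_lib_def by simp
    qed
  qed
  show "\<forall>Lb\<in>\<Lambda>. restrict_lib XI Lb \<in> lC Lb" using rl_XI dec(1) by simp
qed

end


context ctx
begin

definition "PO' = quot fa (po X) \<inter> E' \<times> E'"

lemma E'_sub: "E' \<subseteq> fa ` ev X" unfolding E'_def using Eimpl_sub by blast

lemma pe_E': "plain_exec T (E', PO')"
proof -
  have "plain_exec T (fa ` ev X \<inter> E', quot fa (po X) \<inter> E' \<times> E')" by (rule pe_restrict[OF pe_abs])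
  moreover have "fa ` ev X \<inter> E' = E'" using E'_sub by blast
  ultimately show ?thesis unfolding PO'_def by simp
qed

lemma block_of_E': "e' \<in> E' \<Longrightarrow> \<exists>i b. i < T \<and> b \<in> BB i \<and> fst b \<noteq> {} \<and> e' = (Suc i, \<nu> b, snd b)"
proof -
  assume "e' \<in> E'"
  then obtain x where x: "x \<in> Eimpl" "e' = fa x" unfolding E'_def by blast
  then have "inB x" unfolding Eimpl_def by blast
  then obtain i b where b: "i < T" "b \<in> BB i" "x \<in> fst b" by (rule inB_E)
  then show ?thesis using f_blk[OF b] x by blast
qed

lemma block_A: "i < T \<Longrightarrow> b \<in> BB i \<Longrightarrow> fst b \<noteq> {} \<Longrightarrow> {e \<in> Eimpl. fa e = (Suc i, \<nu> b, snd b)} = fst b"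
proof
  assume b: "i < T" "b \<in> BB i" "fst b \<noteq> {}"
  show "fst b \<subseteq> {e \<in> Eimpl. fa e = (Suc i, \<nu> b, snd b)}"
  proof
    fix e assume e: "e \<in> fst b"
    have "e \<in> ev X" using blk_sub[OF b(1,2)] e inGs[OF b(1)] by blast
    moreover have "inB e" using b e unfolding inB_def B_def by blast
    ultimately show "e \<in> {e \<in> Eimpl. fa e = (Suc i, \<nu> b, snd b)}" using f_blk[OF b(1,2) e] unfolding Eimpl_def by blast
  qed
  show "{e \<in> Eimpl. fa e = (Suc i, \<nu> b, snd b)} \<subseteq> fst b"
  proof
    fix e assume e: "e \<in> {e \<in> Eimpl. fa e = (Suc i, \<nu> b, snd b)}"
    obtain x where x: "x \<in> fst b" using b(3) by blast
    have xe: "x \<in> ev X" using blk_sub[OF b(1,2)] x inGs[OF b(1)] by blast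
    have ee: "e \<in> ev X" "fa e = fa x" using e f_blk[OF b(1,2) x] Eimpl_sub by auto
    then have "e = x \<or> (\<exists>b'\<in>B. e \<in> fst b' \<and> x \<in> fst b')" using f_inj xe by blast
    then show "e \<in> fst b"
    proof
      assume "e = x" then show ?thesis using x by simp
    next
      assume "\<exists>b'\<in>B. e \<in> fst b' \<and> x \<in> fst b'"
      then obtain b' where "b' \<in> B" "e \<in> fst b'" "x \<in> fst b'" by blast
      then have "b' = b" using blk_unique[OF b(1,2) x] by blast
      then show ?thesis using \<open>e \<in> fst b'\<close> by simp
    qed
  qed
qed

lemma poX_block: "i < T \<Longrightarrow> A \<subseteq> fst (Gs!i) \<Longrightarrow> po X \<inter> A \<times> A = snd (Gs!i) \<inter> A \<times> A"
proof
  assume i: "i < T" "A \<subseteq> fst (Gs!i)"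
  show "po X \<inter> A \<times> A \<subseteq> snd (Gs!i) \<inter> A \<times> A"
  proof
    fix z assume z: "z \<in> po X \<inter> A \<times> A"
    then obtain k where k: "k < T" "z \<in> snd (Gs!k)" using poX by blast
    then have "fst z \<in> fst (Gs!k)" using wfGs[OF k(1)] unfolding wfG_def by auto
    moreover have "fst z \<in> fst (Gs!i)" using z i by auto
    ultimately have "k = i" using idx_unique i k by blast
    then show "z \<in> snd (Gs!i) \<inter> A \<times> A" using k z by simp
  qed
  show "snd (Gs!i) \<inter> A \<times> A \<subseteq> po X \<inter> A \<times> A" using poX i by blast
qed

lemma abs_ok: "abstracts I L (ev XI, po XI) (E', PO') fa"
  unfolding abstracts_def fst_conv snd_conv XI_simps
proof (intro conjI)
  show "fa ` Eimpl = E'" unfolding E'_def ..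
  show "evs_of L Eimpl = {}" unfolding evs_of_def using meth_X Eimpl_sub by blast
  show "evs_of L E' = E'" unfolding evs_of_def using E'_meth by blast
  show "\<forall>(x, y)\<in>po X \<inter> Eimpl \<times> Eimpl. (fa x, fa y) \<in> PO'\<^sup>*"
  proof (clarify)
    fix x y assume a: "(x,y) \<in> po X" "x \<in> Eimpl" "y \<in> Eimpl"
    show "(fa x, fa y) \<in> PO'\<^sup>*"
    proof (cases "fa x = fa y")
      case True then show ?thesis by simp
    next
      case False
      then have "(fa x, fa y) \<in> PO'" unfolding PO'_def E'_def using quotI[OF a(1) False] a(2,3) by blast
      then show ?thesis by blast
    qed
  qed
  show "\<forall>e1\<in>Eimpl. \<forall>e2\<in>Eimpl. (fa e1, fa e2) \<in> PO' \<longrightarrow> (e1, e2) \<in> po X \<inter> Eimpl \<times> Eimpl"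
  proof (intro ballI impI)
    fix e1 e2 assume a: "e1 \<in> Eimpl" "e2 \<in> Eimpl" "(fa e1, fa e2) \<in> PO'"
    then show "(e1, e2) \<in> po X \<inter> Eimpl \<times> Eimpl" using po_back Eimpl_sub unfolding PO'_def by blast
  qed
  show "\<forall>e'\<in>E'. let A = {e \<in> Eimpl. fa e = e'}
        in ((outv e', 0), A, po X \<inter> Eimpl \<times> Eimpl \<inter> A \<times> A) \<in> sem (thread e') (I (thread e') (meth e') (args e'))"
  proof
  fix e' assume e': "e' \<in> E'"
  then obtain i b where b: "i < T" "b \<in> BB i" "fst b \<noteq> {}" "e' = (Suc i, \<nu> b, snd b)"
    using block_of_E' by blast
  have A: "{e \<in> Eimpl. fa e = e'} = fst b" using block_A[OF b(1-3)] b(4) by simp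
  have sub: "fst b \<subseteq> fst (Gs!i)" using blk_sub[OF b(1,2)] .
  have sub2: "fst b \<subseteq> Eimpl" using A by blast
  have po: "po X \<inter> Eimpl \<times> Eimpl \<inter> fst b \<times> fst b = snd (Gs!i) \<inter> fst b \<times> fst b"
    using poX_block[OF b(1) sub] sub2 by blast
  have bk: "((snd (snd (snd b)), 0), (fst b, snd (Gs!i) \<inter> fst b \<times> fst b))
      \<in> sem (Suc i) (I (Suc i) (fst (snd b)) (fst (snd (snd b))))"
    using bo[OF b(1)] b(2) unfolding blocks_ok_def by blast
  have o: "outv e' = snd (snd (snd b))" "meth e' = fst (snd b)" "args e' = fst (snd (snd b))"
    "thread e' = Suc i"
    using b(4) by (simp_all add: outv_def meth_def args_def thread_def)
  show "let A = {e \<in> Eimpl. fa e = e'}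
        in ((outv e', 0), A, po X \<inter> Eimpl \<times> Eimpl \<inter> A \<times> A) \<in> sem (thread e') (I (thread e') (meth e') (args e'))"
    unfolding Let_def A po o using bk .
  qed
qed

definition LSP where
  "LSP stmp' so' g \<longleftrightarrow>
     (let S' = {(e, a). e \<in> E' \<and> a \<in> stmp' e};
            X0 = \<lparr> ev = E', po = PO', stmp = stmp', so = so', hb = {} \<rparr>
        in (\<forall>e\<in>E'. stmp' e \<noteq> {}) \<and> (\<forall>e. e \<notin> E' \<longrightarrow> stmp' e = {}) \<and>
           so' \<subseteq> S' \<times> S' \<and>
           (\<forall>x\<in>S'. g x \<in> SEv XI) \<and>
           (\<forall>e' a' e a. (e', a') \<in> S' \<and> g (e', a') = (e, a) \<longrightarrow>
               fa e = e' \<and>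
               (\<forall>a0. (a0, a') \<in> to \<longrightarrow> (\<exists>e1 a1. (e1, a1) \<in> SEv XI \<and> fa e1 = e' \<and> (a0, a1) \<in> to \<and>
                                               ((e1, a1), (e, a)) \<in> (hb XI)\<^sup>*)) \<and>
               (\<forall>a0. (a', a0) \<in> to \<longrightarrow> (\<exists>e2 a2. (e2, a2) \<in> SEv XI \<and> fa e2 = e' \<and> (a2, a0) \<in> to \<and>
                                               ((e, a), (e2, a2)) \<in> (hb XI)\<^sup>*))) \<and>
           (\<forall>(x, y)\<in>so'. (g x, g y) \<in> hb XI) \<and>
           (\<forall>hb'. hb' \<subseteq> S' \<times> S' \<and> trans hb' \<and> (ppo to X0 \<union> so')\<^sup>+ \<subseteq> hb' \<and>
                  (\<forall>(x, y)\<in>hb'. (g x, g y) \<in> hb XI)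
                  \<longrightarrow> X0\<lparr>hb := hb'\<rparr> \<in> lC L))"

lemma LSP_ex: "\<exists>stmp' so' g. LSP stmp' so' g"
proof -
  have "consistent T to \<Lambda> XI \<and> plain_exec T (E', PO') \<and> abstracts I L (ev XI, po XI) (E', PO') fa"
    using cons_XI pe_E' abs_ok by blast
  then show ?thesis using ls unfolding locally_sound_def LSP_def by blast
qed

end


lemma comp3: "trans r \<Longrightarrow> (u,v) \<in> r\<^sup>* \<Longrightarrow> (v,w) \<in> r \<Longrightarrow> (w,z) \<in> r\<^sup>* \<Longrightarrow> (u,z) \<in> r"
proof -
  assume a: "trans r" "(u,v) \<in> r\<^sup>*" "(v,w) \<in> r" "(w,z) \<in> r\<^sup>*"
  have "(u,w) \<in> r\<^sup>+" using rtrancl_into_trancl1[OF a(2) a(3)] .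
  then have "(u,z) \<in> r\<^sup>+" by (rule trancl_rtrancl_trancl) (rule a(4))
  then show ?thesis using trancl_id[OF a(1)] by simp
qed

lemma SEv_iff: "(e, a) \<in> SEv X \<longleftrightarrow> e \<in> ev X \<and> a \<in> stmp X e"
  unfolding SEv_def by simp

locale ctx2 = ctx T to \<Lambda> L I ps vs X Gs BB \<nu>
  for T :: nat and to :: "('s \<times> 's) set"
    and \<Lambda> :: "('v, 'm, 's) library set" and L :: "('v, 'm, 's) library"
    and I :: "('v, 'm) impl" and ps :: "('v, 'm) prog list" and vs :: "'v list"
    and X :: "('v, 'm, 's) execution" and Gs :: "('v, 'm) pexec list"
    and BB :: "nat \<Rightarrow> (('v,'m) event set \<times> ('v,'m) lab) set" and \<nu> :: "(('v,'m) event set \<times> ('v,'m) lab) \<Rightarrow> nat" +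
  fixes stmp' :: "('v,'m) event \<Rightarrow> 's set" and so' and g
  assumes H: "LSP stmp' so' g"
begin

definition "S' = {(e, a). e \<in> E' \<and> a \<in> stmp' e}"
definition "X0 = \<lparr> ev = E', po = PO', stmp = stmp', so = so', hb = {} \<rparr>"

lemma H0: "(\<forall>e\<in>E'. stmp' e \<noteq> {}) \<and>
  (\<forall>e. e \<notin> E' \<longrightarrow> stmp' e = {}) \<and>
  (so' \<subseteq> S' \<times> S') \<and>
  (\<forall>x\<in>S'. g x \<in> SEv XI) \<and>
  (\<forall>e' a' e a. (e', a') \<in> S' \<and> g (e', a') = (e, a) \<longrightarrow>
               fa e = e' \<and>
               (\<forall>a0. (a0, a') \<in> to \<longrightarrow> (\<exists>e1 a1. (e1, a1) \<in> SEv XI \<and> fa e1 = e' \<and> (a0, a1) \<in> to \<and>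
                                               ((e1, a1), (e, a)) \<in> (hb XI)\<^sup>*)) \<and>
               (\<forall>a0. (a', a0) \<in> to \<longrightarrow> (\<exists>e2 a2. (e2, a2) \<in> SEv XI \<and> fa e2 = e' \<and> (a2, a0) \<in> to \<and>
                                               ((e, a), (e2, a2)) \<in> (hb XI)\<^sup>*))) \<and>
  (\<forall>(x, y)\<in>so'. (g x, g y) \<in> hb XI) \<and>
  (\<forall>hb'. hb' \<subseteq> S' \<times> S' \<and> trans hb' \<and> (ppo to X0 \<union> so')\<^sup>+ \<subseteq> hb' \<and>
                  (\<forall>(x, y)\<in>hb'. (g x, g y) \<in> hb XI)
                  \<longrightarrow> X0\<lparr>hb := hb'\<rparr> \<in> lC L)"
  using H unfolding LSP_def Let_def S'_def[symmetric] X0_def[symmetric] .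

lemma Hs1: "\<forall>e\<in>E'. stmp' e \<noteq> {}"
  by (rule conjunct1[OF H0])

lemma Hs2: "\<forall>e. e \<notin> E' \<longrightarrow> stmp' e = {}"
  by (rule conjunct1[OF conjunct2[OF H0]])

lemma Hs3: "so' \<subseteq> S' \<times> S'"
  by (rule conjunct1[OF conjunct2[OF conjunct2[OF H0]]])

lemma Hs4: "\<forall>x\<in>S'. g x \<in> SEv XI"
  by (rule conjunct1[OF conjunct2[OF conjunct2[OF conjunct2[OF H0]]]])

lemma Hs5: "\<forall>e' a' e a. (e', a') \<in> S' \<and> g (e', a') = (e, a) \<longrightarrow>
               fa e = e' \<and>
               (\<forall>a0. (a0, a') \<in> to \<longrightarrow> (\<exists>e1 a1. (e1, a1) \<in> SEv XI \<and> fa e1 = e' \<and> (a0, a1) \<in> to \<and>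
                                               ((e1, a1), (e, a)) \<in> (hb XI)\<^sup>*)) \<and>
               (\<forall>a0. (a', a0) \<in> to \<longrightarrow> (\<exists>e2 a2. (e2, a2) \<in> SEv XI \<and> fa e2 = e' \<and> (a2, a0) \<in> to \<and>
                                               ((e, a), (e2, a2)) \<in> (hb XI)\<^sup>*))"
  by (rule conjunct1[OF conjunct2[OF conjunct2[OF conjunct2[OF conjunct2[OF H0]]]]])

lemma Hs6: "\<forall>(x, y)\<in>so'. (g x, g y) \<in> hb XI"
  by (rule conjunct1[OF conjunct2[OF conjunct2[OF conjunct2[OF conjunct2[OF conjunct2[OF H0]]]]]])

lemma Hs7: "\<forall>hb'. hb' \<subseteq> S' \<times> S' \<and> trans hb' \<and> (ppo to X0 \<union> so')\<^sup>+ \<subseteq> hb' \<and>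
                  (\<forall>(x, y)\<in>hb'. (g x, g y) \<in> hb XI)
                  \<longrightarrow> X0\<lparr>hb := hb'\<rparr> \<in> lC L"
  by (rule conjunct2[OF conjunct2[OF conjunct2[OF conjunct2[OF conjunct2[OF conjunct2[OF H0]]]]]])

lemmas Hs = Hs1 Hs2 Hs3 Hs4 Hs5 Hs6 Hs7

lemma SEv_XI_iff: "(e, a) \<in> SEv XI \<longleftrightarrow> e \<in> Eimpl \<and> a \<in> stmp X e"
  unfolding SEv_iff XI_simps by auto

lemma g_in: "(e', a') \<in> S' \<Longrightarrow> g (e', a') = (e, a) \<Longrightarrow> e \<in> Eimpl \<and> a \<in> stmp X e"
  using Hs(4) SEv_XI_iff by (metis)

lemma clause2: "(e', a') \<in> S' \<Longrightarrow> g (e', a') = (e, a) \<Longrightarrow> (a0, a') \<in> to \<Longrightarrow>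
   \<exists>e1 a1. e1 \<in> Eimpl \<and> a1 \<in> stmp X e1 \<and> fa e1 = e' \<and> (a0, a1) \<in> to \<and> ((e1, a1), (e, a)) \<in> (hb XI)\<^sup>*"
proof -
  assume a: "(e', a') \<in> S'" "g (e', a') = (e, a)" "(a0, a') \<in> to"
  then obtain e1 a1 where "(e1, a1) \<in> SEv XI" "fa e1 = e'" "(a0, a1) \<in> to" "((e1, a1), (e, a)) \<in> (hb XI)\<^sup>*"
    using Hs(5) by blast
  then show ?thesis unfolding SEv_XI_iff by blast
qed

lemma clause3: "(e', a') \<in> S' \<Longrightarrow> g (e', a') = (e, a) \<Longrightarrow> (a', a0) \<in> to \<Longrightarrow>
   \<exists>e2 a2. e2 \<in> Eimpl \<and> a2 \<in> stmp X e2 \<and> fa e2 = e' \<and> (a2, a0) \<in> to \<and> ((e, a), (e2, a2)) \<in> (hb XI)\<^sup>*"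
proof -
  assume a: "(e', a') \<in> S'" "g (e', a') = (e, a)" "(a', a0) \<in> to"
  then obtain e2 a2 where "(e2, a2) \<in> SEv XI" "fa e2 = e'" "(a2, a0) \<in> to" "((e, a), (e2, a2)) \<in> (hb XI)\<^sup>*"
    using Hs(5) by blast
  then show ?thesis unfolding SEv_XI_iff by blast
qed

lemma ppoX_hb: "ppo to X \<subseteq> hb X"
proof
  fix p assume "p \<in> ppo to X"
  then have "p \<in> (ppo to X \<union> so X)\<^sup>+" by (intro r_into_trancl') simp
  then show "p \<in> hb X" using consX(2) by blast
qed
lemma soX_hb: "so X \<subseteq> hb X"
proof
  fix p assume "p \<in> so X"
  then have "p \<in> (ppo to X \<union> so X)\<^sup>+" by (intro r_into_trancl') simp
  then show "p \<in> hb X" using consX(2) by blast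
qed

lemma transXI: "trans (hb XI)" using cons_XI unfolding consistent_def by blast
lemma hbXI_sub: "hb XI \<subseteq> hb X" unfolding XI_simps by blast

lemma ppo_step: "(x, y) \<in> po X \<Longrightarrow> a \<in> stmp X x \<Longrightarrow> b \<in> stmp X y \<Longrightarrow> (a, b) \<in> to \<Longrightarrow> ((x, a), (y, b)) \<in> hb X"
  using ppoX_hb unfolding ppo_def by blast

lemma ppo_stepI: "(x, y) \<in> po X \<Longrightarrow> x \<in> Eimpl \<Longrightarrow> y \<in> Eimpl \<Longrightarrow> a \<in> stmp X x \<Longrightarrow> b \<in> stmp X y \<Longrightarrow> (a, b) \<in> to
   \<Longrightarrow> ((x, a), (y, b)) \<in> hb XI"
  using ppo_step unfolding XI_simps PI_def by simp

lemma LL: "(e1, e2) \<in> quot fa (po X) \<Longrightarrow> e1 \<in> E' \<Longrightarrow> e2 \<in> E' \<Longrightarrow> a1 \<in> stmp' e1 \<Longrightarrow> a2 \<in> stmp' e2 \<Longrightarrow>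
   (a1, a2) \<in> to \<Longrightarrow> (g (e1, a1), g (e2, a2)) \<in> hb XI"
proof -
  assume a: "(e1, e2) \<in> quot fa (po X)" "e1 \<in> E'" "e2 \<in> E'" "a1 \<in> stmp' e1" "a2 \<in> stmp' e2" "(a1, a2) \<in> to"
  have s1: "(e1, a1) \<in> S'" "(e2, a2) \<in> S'" using a unfolding S'_def by auto
  obtain e a where ea: "g (e1, a1) = (e, a)" by (cases "g (e1, a1)")
  obtain e'' a'' where ea2: "g (e2, a2) = (e'', a'')" by (cases "g (e2, a2)")
  obtain x ax where x: "x \<in> Eimpl" "ax \<in> stmp X x" "fa x = e1" "(ax, a2) \<in> to" "((e, a), (x, ax)) \<in> (hb XI)\<^sup>*"
    using clause3[OF s1(1) ea a(6)] by blast
  obtain y ay where y: "y \<in> Eimpl" "ay \<in> stmp X y" "fa y = e2" "(ax, ay) \<in> to" "((y, ay), (e'', a'')) \<in> (hb XI)\<^sup>*"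
    using clause2[OF s1(2) ea2 x(4)] by blast
  have "(x, y) \<in> po X" using po_back x(1,3) y(1,3) a(1) Eimpl_sub by blast
  then have "((x, ax), (y, ay)) \<in> hb XI" using ppo_stepI x y by blast
  then have "((e, a), (e'', a'')) \<in> hb XI" using comp3[OF transXI x(5) _ y(5)] by blast
  then show ?thesis using ea ea2 by simp
qed

end


context ctx2
begin

definition "Gm x = (if fst x \<in> E' then g x else x)"
definition "stmpN e = (if e \<in> E' then stmp' e else if e \<in> C then stmp X e else {})"
definition "SN = {(e, a). e \<in> C \<union> E' \<and> a \<in> stmpN e}"
definition "soN = so X \<inter> {(x, y). fst x \<in> C \<and> fst y \<in> C} \<union> so'"
definition "hbN = {(x, y). x \<in> SN \<and> y \<in> SN \<and> (Gm x, Gm y) \<in> hb X}"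
definition "XN = \<lparr> ev = C \<union> E', po = quot fa (po X), stmp = stmpN, so = soN, hb = hbN \<rparr>"
definition "hbL = {(x, y). x \<in> S' \<and> y \<in> S' \<and> (g x, g y) \<in> hb XI}"

lemma XN_simps: "ev XN = C \<union> E'" "po XN = quot fa (po X)" "stmp XN = stmpN" "so XN = soN" "hb XN = hbN"
  by (simp_all add: XN_def)

lemma SEv_XN: "SEv XN = SN"
  unfolding SEv_def SN_def XN_simps by simp

lemma stmpN_mem: "a \<in> stmpN e \<Longrightarrow> e \<in> C \<union> E'"
  unfolding stmpN_def by (auto split: if_splits)

lemma stmpN_E': "e \<in> E' \<Longrightarrow> stmpN e = stmp' e" unfolding stmpN_def by simp
lemma stmpN_C: "e \<in> C \<Longrightarrow> stmpN e = stmp X e" unfolding stmpN_def using CE'_disj by auto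

lemma SN_E': "e \<in> E' \<Longrightarrow> (e, a) \<in> SN \<longleftrightarrow> (e, a) \<in> S'"
  unfolding SN_def S'_def using stmpN_E' by auto

lemma SN_C: "e \<in> C \<Longrightarrow> (e, a) \<in> SN \<longleftrightarrow> a \<in> stmp X e"
  unfolding SN_def using stmpN_C by auto

lemma Gm_E': "e \<in> E' \<Longrightarrow> Gm (e, a) = g (e, a)" unfolding Gm_def by simp
lemma Gm_C: "e \<in> C \<Longrightarrow> Gm (e, a) = (e, a)" unfolding Gm_def using CE'_disj by auto

lemma po_C: "x \<in> C \<Longrightarrow> y \<in> C \<Longrightarrow> (x, y) \<in> quot fa (po X) \<longleftrightarrow> (x, y) \<in> po X"
proof
  assume a: "x \<in> C" "y \<in> C"
  {
    assume "(x, y) \<in> quot fa (po X)"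
    moreover have "x \<in> ev X" "y \<in> ev X" using a C_sub by auto
    ultimately show "(x, y) \<in> po X" using po_back[of x y] fa_C[OF a(1)] fa_C[OF a(2)] by simp
  next
    assume xy: "(x, y) \<in> po X"
    have "(x, x) \<notin> po X" using peX unfolding pe_iff by blast
    then have "x \<noteq> y" using xy by blast
    then show "(x, y) \<in> quot fa (po X)" using quotI[OF xy, of fa] fa_C a by simp
  }
qed

lemma quot_sub: "quot fa (po X) \<subseteq> (C \<union> E') \<times> (C \<union> E')"
  using pe_abs unfolding pe_iff fa_evX by blast

lemma hbXI_rt: "(hb XI)\<^sup>* \<subseteq> (hb X)\<^sup>*" using rtrancl_mono[OF hbXI_sub] .

lemma transX: "trans (hb X)" using consX(4) .

lemma ppo_hbN: "ppo to XN \<subseteq> hbN"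
proof
  fix p assume "p \<in> ppo to XN"
  then obtain e1 a1 e2 a2 where p: "p = ((e1, a1), (e2, a2))" "(e1, e2) \<in> quot fa (po X)"
    "a1 \<in> stmpN e1" "a2 \<in> stmpN e2" "(a1, a2) \<in> to"
    unfolding ppo_def XN_simps by blast
  have e: "e1 \<in> C \<union> E'" "e2 \<in> C \<union> E'" using stmpN_mem p by auto
  have inSN: "(e1, a1) \<in> SN" "(e2, a2) \<in> SN" unfolding SN_def using e p by auto
  have "(Gm (e1, a1), Gm (e2, a2)) \<in> hb X"
  proof (cases "e1 \<in> E'")
    case E1: True
    show ?thesis
    proof (cases "e2 \<in> E'")
      case True
      have "(g (e1, a1), g (e2, a2)) \<in> hb XI"
        using LL[OF p(2) E1 True] p(3,4,5) stmpN_E' E1 True by simp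
      then show ?thesis using hbXI_sub Gm_E' E1 True by auto
    next
      case False
      then have C2: "e2 \<in> C" using e by blast
      have s1: "(e1, a1) \<in> S'" using SN_E'[OF E1] inSN by blast
      obtain e a where ea: "g (e1, a1) = (e, a)" by (cases "g (e1, a1)")
      obtain x ax where x: "x \<in> Eimpl" "ax \<in> stmp X x" "fa x = e1" "(ax, a2) \<in> to" "((e, a), (x, ax)) \<in> (hb XI)\<^sup>*"
        using clause3[OF s1 ea p(5)] by blast
      have q: "(fa x, fa e2) \<in> quot fa (po X)" using p(2) x(3) fa_C[OF C2] by simp
      have "x \<in> ev X" "e2 \<in> ev X" using x(1) C2 Eimpl_sub C_sub by auto
      then have "(x, e2) \<in> po X" using po_back q by blast
      then have st: "((x, ax), (e2, a2)) \<in> hb X" using ppo_step x(2,4) p(4) stmpN_C C2 by simp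
      have "((e, a), (e2, a2)) \<in> hb X" using comp3[OF transX _ st] x(5) hbXI_rt by blast
      then show ?thesis using Gm_E'[OF E1] Gm_C[OF C2] ea by simp
    qed
  next
    case False
    then have C1: "e1 \<in> C" using e by blast
    show ?thesis
    proof (cases "e2 \<in> E'")
      case E2: True
      have s2: "(e2, a2) \<in> S'" using SN_E'[OF E2] inSN by blast
      obtain e a where ea: "g (e2, a2) = (e, a)" by (cases "g (e2, a2)")
      obtain y ay where y: "y \<in> Eimpl" "ay \<in> stmp X y" "fa y = e2" "(a1, ay) \<in> to" "((y, ay), (e, a)) \<in> (hb XI)\<^sup>*"
        using clause2[OF s2 ea p(5)] by blast
      have q: "(fa e1, fa y) \<in> quot fa (po X)" using p(2) y(3) fa_C[OF C1] by simp
      have "y \<in> ev X" "e1 \<in> ev X" using y(1) C1 Eimpl_sub C_sub by auto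
      then have "(e1, y) \<in> po X" using po_back q by blast
      then have st: "((e1, a1), (y, ay)) \<in> hb X" using ppo_step y(2,4) p(3) stmpN_C C1 by simp
      have "((e1, a1), (e, a)) \<in> hb X" using comp3[OF transX _ st] y(5) hbXI_rt by blast
      then show ?thesis using Gm_E'[OF E2] Gm_C[OF C1] ea by simp
    next
      case False
      then have C2: "e2 \<in> C" using e by blast
      have "(e1, e2) \<in> po X" using po_C C1 C2 p(2) by blast
      then have "((e1, a1), (e2, a2)) \<in> hb X" using ppo_step p(3,4,5) stmpN_C C1 C2 by simp
      then show ?thesis using Gm_C C1 C2 by simp
    qed
  qed
  then show "p \<in> hbN" unfolding hbN_def using inSN p(1) by simp
qed

lemma so_hbN: "soN \<subseteq> hbN"
proof
  fix z assume z: "z \<in> soN"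
  obtain x y where xy: "z = (x, y)" by (cases z)
  obtain ex ax where x: "x = (ex, ax)" by (cases x)
  obtain ey ay where y: "y = (ey, ay)" by (cases y)
  from z[unfolded soN_def] show "z \<in> hbN"
  proof
    assume a: "z \<in> so X \<inter> {(x, y). fst x \<in> C \<and> fst y \<in> C}"
    then have "(x, y) \<in> SEv X \<times> SEv X" using wfXs(3) xy by blast
    then have s: "ax \<in> stmp X ex" "ay \<in> stmp X ey" unfolding x y by (auto simp: SEv_def)
    have c: "ex \<in> C" "ey \<in> C" using a xy x y by auto
    have "(x, y) \<in> hb X" using a xy soX_hb by blast
    then show ?thesis unfolding hbN_def xy x y using SN_C c s Gm_C by simp
  next
    assume a: "z \<in> so'"
    then have "(x, y) \<in> S' \<times> S'" using Hs(3) xy by blast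
    then have s: "(ex, ax) \<in> S'" "(ey, ay) \<in> S'" "ex \<in> E'" "ey \<in> E'" unfolding x y S'_def by auto
    have "(g x, g y) \<in> hb XI" using Hs(6) a xy by blast
    then have "(g x, g y) \<in> hb X" using hbXI_sub by blast
    then show ?thesis unfolding hbN_def xy x y using SN_E' s Gm_E' by simp
  qed
qed

lemma trans_hbN: "trans hbN"
proof (rule transI)
  fix x y z assume "(x, y) \<in> hbN" "(y, z) \<in> hbN"
  then show "(x, z) \<in> hbN" unfolding hbN_def using transD[OF transX] by blast
qed

lemma irrefl_hbN: "irrefl hbN"
proof (rule irreflI)
  fix x show "(x, x) \<notin> hbN" unfolding hbN_def using consX(3) irreflD by fastforce
qed

lemma hbN_sub: "hbN \<subseteq> SN \<times> SN" unfolding hbN_def by blast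

lemma closN: "(ppo to XN \<union> soN)\<^sup>+ \<subseteq> hbN"
proof -
  have "ppo to XN \<union> soN \<subseteq> hbN" using ppo_hbN so_hbN by blast
  then have "(ppo to XN \<union> soN)\<^sup>+ \<subseteq> hbN\<^sup>+" by (rule trancl_mono_subset)
  then show ?thesis using trancl_id[OF trans_hbN] by simp
qed

lemma wf_XN: "wf_exec T XN"
  unfolding wf_exec_def SEv_XN XN_simps
proof (intro conjI)
  show "plain_exec T (C \<union> E', quot fa (po X))" using pe_abs fa_evX by simp
  show "\<forall>e\<in>C \<union> E'. stmpN e \<noteq> {}"
  proof
    fix e assume "e \<in> C \<union> E'"
    then show "stmpN e \<noteq> {}" using Hs(1) wfXs(1) C_sub stmpN_E' stmpN_C by blast
  qed
  show "\<forall>e. e \<notin> C \<union> E' \<longrightarrow> stmpN e = {}" unfolding stmpN_def by simp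
  show "soN \<subseteq> SN \<times> SN" using so_hbN hbN_sub by blast
  show "hbN \<subseteq> SN \<times> SN" by (rule hbN_sub)
qed

lemma evsL: "evs_of L (C \<union> E') = E'"
  unfolding evs_of_def using E'_meth C_meth by blast

lemma evsLb: "Lb \<in> \<Lambda> \<Longrightarrow> evs_of Lb (C \<union> E') = evs_of Lb C"
proof -
  assume Lb: "Lb \<in> \<Lambda>"
  then have "lM L \<inter> lM Lb = {}" using compat unfolding compatible_def by blast
  then show ?thesis unfolding evs_of_def using E'_meth by blast
qed

lemma hbN_E': "hbN \<inter> {(x, y). fst x \<in> E' \<and> fst y \<in> E'} = hbL"
proof (intro set_eqI iffI)
  fix z assume z: "z \<in> hbN \<inter> {(x, y). fst x \<in> E' \<and> fst y \<in> E'}"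
  obtain ex ax ey ay where zz: "z = ((ex, ax), (ey, ay))" by (cases z) auto
  have e: "ex \<in> E'" "ey \<in> E'" using z zz by auto
  have "(ex, ax) \<in> S'" "(ey, ay) \<in> S'" "(g (ex, ax), g (ey, ay)) \<in> hb X"
    using z zz e SN_E' Gm_E' unfolding hbN_def by auto
  moreover have "g (ex, ax) \<in> SEv XI" "g (ey, ay) \<in> SEv XI" using Hs(4) calculation(1,2) by blast+
  ultimately have "(g (ex, ax), g (ey, ay)) \<in> hb XI" unfolding XI_simps PI_def SEv_XI by auto
  then show "z \<in> hbL" unfolding hbL_def zz using \<open>(ex, ax) \<in> S'\<close> \<open>(ey, ay) \<in> S'\<close> by simp
next
  fix z assume z: "z \<in> hbL"
  obtain ex ax ey ay where zz: "z = ((ex, ax), (ey, ay))" by (cases z) auto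
  have s: "(ex, ax) \<in> S'" "(ey, ay) \<in> S'" "(g (ex, ax), g (ey, ay)) \<in> hb XI" using z zz unfolding hbL_def by auto
  have e: "ex \<in> E'" "ey \<in> E'" using s unfolding S'_def by auto
  show "z \<in> hbN \<inter> {(x, y). fst x \<in> E' \<and> fst y \<in> E'}"
    unfolding zz hbN_def using s e SN_E' Gm_E' hbXI_sub by auto
qed

lemma soN_E': "soN \<inter> {(x, y). fst x \<in> E' \<and> fst y \<in> E'} = so'"
proof -
  have "so' \<subseteq> {(x, y). fst x \<in> E' \<and> fst y \<in> E'}" using Hs(3) unfolding S'_def by auto
  moreover have "so X \<inter> {(x, y). fst x \<in> C \<and> fst y \<in> C} \<inter> {(x, y). fst x \<in> E' \<and> fst y \<in> E'} = {}"
    using CE'_disj by auto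
  ultimately show ?thesis unfolding soN_def by blast
qed

lemma rl_L: "restrict_lib XN L = X0\<lparr>hb := hbL\<rparr>"
proof -
  have st: "(\<lambda>e. if e \<in> E' then stmpN e else {}) = stmp'"
    using Hs(2) stmpN_E' by (auto simp: fun_eq_iff)
  have "restrict_lib XN L = restrict_exec XN E'" unfolding restrict_lib_def XN_simps evsL ..
  also have "\<dots> = \<lparr> ev = E', po = PO', stmp = stmp', so = so', hb = hbL \<rparr>"
    unfolding restrict_exec_def XN_simps st soN_E' hbN_E' PO'_def
    by (simp add: Int_absorb1)
  also have "\<dots> = X0\<lparr>hb := hbL\<rparr>" unfolding X0_def by simp
  finally show ?thesis .
qed

lemma trans_hbL: "trans hbL"
proof (rule transI)
  fix x y z assume "(x, y) \<in> hbL" "(y, z) \<in> hbL"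
  then show "(x, z) \<in> hbL" unfolding hbL_def using transD[OF transXI] by blast
qed

lemma lC_L: "restrict_lib XN L \<in> lC L"
proof -
  have a1: "hbL \<subseteq> S' \<times> S'" unfolding hbL_def by blast
  have p: "ppo to X0 \<subseteq> hbL"
  proof
    fix p assume "p \<in> ppo to X0"
    then obtain e1 a1 e2 a2 where p: "p = ((e1, a1), (e2, a2))" "(e1, e2) \<in> PO'"
      "a1 \<in> stmp' e1" "a2 \<in> stmp' e2" "(a1, a2) \<in> to"
      unfolding ppo_def X0_def by auto
    have e: "e1 \<in> E'" "e2 \<in> E'" "(e1, e2) \<in> quot fa (po X)" using p(2) unfolding PO'_def by auto
    have "(g (e1, a1), g (e2, a2)) \<in> hb XI" using LL[OF e(3) e(1,2) p(3,4,5)] .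
    then show "p \<in> hbL" unfolding hbL_def p(1) S'_def using e p by simp
  qed
  have s: "so' \<subseteq> hbL" unfolding hbL_def using Hs(3) Hs(6) by blast
  have "ppo to X0 \<union> so' \<subseteq> hbL" using p s by blast
  then have "(ppo to X0 \<union> so')\<^sup>+ \<subseteq> hbL\<^sup>+" by (rule trancl_mono_subset)
  then have a3: "(ppo to X0 \<union> so')\<^sup>+ \<subseteq> hbL" using trancl_id[OF trans_hbL] by simp
  have a4: "\<forall>(x, y)\<in>hbL. (g x, g y) \<in> hb XI" unfolding hbL_def by blast
  have "X0\<lparr>hb := hbL\<rparr> \<in> lC L" using Hs(7) a1 trans_hbL a3 a4 by blast
  then show ?thesis using rl_L by simp
qed

lemma rl_Lb: "Lb \<in> \<Lambda> \<Longrightarrow> restrict_lib XN Lb = restrict_exec X (evs_of Lb C)"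
proof -
  assume Lb: "Lb \<in> \<Lambda>"
  let ?D = "evs_of Lb C"
  have D: "?D \<subseteq> C" unfolding evs_of_def by blast
  have "restrict_exec XN ?D = restrict_exec X ?D"
  proof (rule restrict_cong)
    show "ev XN \<inter> ?D = ev X \<inter> ?D" using D C_sub unfolding XN_simps by blast
    show "po XN \<inter> ?D \<times> ?D = po X \<inter> ?D \<times> ?D" unfolding XN_simps using po_C D by blast
    show "\<forall>e\<in>?D. stmp XN e = stmp X e" unfolding XN_simps using stmpN_C D by blast
    show "so XN \<inter> {(x, y). fst x \<in> ?D \<and> fst y \<in> ?D} = so X \<inter> {(x, y). fst x \<in> ?D \<and> fst y \<in> ?D}"
    proof -
      have q: "\<forall>z\<in>so'. fst (fst z) \<in> E'" using Hs(3) unfolding S'_def by auto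
      have "so' \<inter> {(x, y). fst x \<in> ?D \<and> fst y \<in> ?D} = {}"
      proof (rule ccontr)
        assume "so' \<inter> {(x, y). fst x \<in> ?D \<and> fst y \<in> ?D} \<noteq> {}"
        then obtain z where "z \<in> so'" "fst (fst z) \<in> ?D" by auto
        then show False using q D CE'_disj by blast
      qed
      then show ?thesis unfolding XN_simps soN_def using D by blast
    qed
    show "hb XN \<inter> {(x, y). fst x \<in> ?D \<and> fst y \<in> ?D} = hb X \<inter> {(x, y). fst x \<in> ?D \<and> fst y \<in> ?D}"
    proof (intro set_eqI iffI)
      fix z assume z: "z \<in> hb XN \<inter> {(x, y). fst x \<in> ?D \<and> fst y \<in> ?D}"
      obtain ex ax ey ay where zz: "z = ((ex, ax), (ey, ay))" by (cases z) auto
      have c: "ex \<in> C" "ey \<in> C" using z zz D by auto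
      show "z \<in> hb X \<inter> {(x, y). fst x \<in> ?D \<and> fst y \<in> ?D}"
        using z zz c Gm_C unfolding XN_simps hbN_def by auto
    next
      fix z assume z: "z \<in> hb X \<inter> {(x, y). fst x \<in> ?D \<and> fst y \<in> ?D}"
      obtain ex ax ey ay where zz: "z = ((ex, ax), (ey, ay))" by (cases z) auto
      have c: "ex \<in> C" "ey \<in> C" using z zz D by auto
      have "z \<in> SEv X \<times> SEv X" using z wfXs(4) by blast
      then have s: "ax \<in> stmp X ex" "ay \<in> stmp X ey" unfolding zz by (auto simp: SEv_def)
      show "z \<in> hb XN \<inter> {(x, y). fst x \<in> ?D \<and> fst y \<in> ?D}"
        using z zz c s Gm_C SN_C unfolding XN_simps hbN_def by auto
    qed
  qed
  then show ?thesis unfolding restrict_lib_def XN_simps evsLb[OF Lb] .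
qed

lemma cons_XN: "consistent T to (insert L \<Lambda>) XN"
  unfolding consistent_def
proof (intro conjI)
  show "wf_exec T XN" by (rule wf_XN)
  show "(ppo to XN \<union> so XN)\<^sup>+ \<subseteq> hb XN" unfolding XN_simps(4,5) by (rule closN)
  show "irrefl (hb XN)" unfolding XN_simps by (rule irrefl_hbN)
  show "trans (hb XN)" unfolding XN_simps by (rule trans_hbN)
  show "ev XN = (\<Union>Lb\<in>insert L \<Lambda>. evs_of Lb (ev XN))"
  proof -
    have "C \<subseteq> (\<Union>Lb\<in>\<Lambda>. evs_of Lb C)"
    proof
      fix e assume e: "e \<in> C"
      then have "e \<in> (\<Union>Lb\<in>\<Lambda>. evs_of Lb (ev X))" using consX(5) C_sub by blast
      then show "e \<in> (\<Union>Lb\<in>\<Lambda>. evs_of Lb C)" using e unfolding evs_of_def by blast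
    qed
    then have "C \<union> E' = (\<Union>Lb\<in>insert L \<Lambda>. evs_of Lb (C \<union> E'))"
      using evsL evsLb unfolding evs_of_def by auto
    then show ?thesis unfolding XN_simps .
  qed
  show "so XN = (\<Union>Lb\<in>insert L \<Lambda>. so (restrict_lib XN Lb))"
  proof -
    have A: "(\<Union>Lb\<in>insert L \<Lambda>. so (restrict_lib XN Lb)) = so' \<union> (\<Union>Lb\<in>\<Lambda>. so X \<inter> {(x, y). fst x \<in> evs_of Lb C \<and> fst y \<in> evs_of Lb C})"
      using rl_L rl_Lb unfolding X0_def by simp
    have B: "so X \<inter> {(x, y). fst x \<in> C \<and> fst y \<in> C} = (\<Union>Lb\<in>\<Lambda>. so X \<inter> {(x, y). fst x \<in> evs_of Lb C \<and> fst y \<in> evs_of Lb C})"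
    proof (intro set_eqI iffI)
      fix z assume z: "z \<in> so X \<inter> {(x, y). fst x \<in> C \<and> fst y \<in> C}"
      then obtain Lb where Lb: "Lb \<in> \<Lambda>" "z \<in> so (restrict_lib X Lb)" using consX(6) by blast
      then have "fst (fst z) \<in> evs_of Lb (ev X)" "fst (snd z) \<in> evs_of Lb (ev X)" unfolding restrict_lib_def by auto
      then have "fst (fst z) \<in> evs_of Lb C" "fst (snd z) \<in> evs_of Lb C" using z unfolding evs_of_def by auto
      then show "z \<in> (\<Union>Lb\<in>\<Lambda>. so X \<inter> {(x, y). fst x \<in> evs_of Lb C \<and> fst y \<in> evs_of Lb C})"
        using Lb(1) z by (cases z) auto
    next
      fix z assume "z \<in> (\<Union>Lb\<in>\<Lambda>. so X \<inter> {(x, y). fst x \<in> evs_of Lb C \<and> fst y \<in> evs_of Lb C})"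
      then show "z \<in> so X \<inter> {(x, y). fst x \<in> C \<and> fst y \<in> C}" unfolding evs_of_def by auto
    qed
    show ?thesis unfolding XN_simps A soN_def B by blast
  qed
  show "\<forall>Lb\<in>insert L \<Lambda>. restrict_lib XN Lb \<in> lC Lb"
    using lC_L rl_Lb dec(2) by auto
qed

lemma outc: "vs \<in> outcome T to (insert L \<Lambda>) ps"
proof -
  have "(vs, (ev XN, po XN)) \<in> sem_conc ps" using sem_abs unfolding XN_simps fa_evX .
  then show ?thesis unfolding outcome_def using cons_XN by blast
qed

end


lemma blocks_finite:
  assumes "blocks_ok t I L G Bs" "finite (fst G)"
  shows "finite Bs"
proof -
  have inj: "inj_on fst Bs"
  proof (rule inj_onI)
    fix b1 b2 assume b: "b1 \<in> Bs" "b2 \<in> Bs" "fst b1 = fst b2"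
    show "b1 = b2"
    proof (rule ccontr)
      assume "b1 \<noteq> b2"
      then have "fst b1 \<inter> fst b2 = {}" using assms(1) b unfolding blocks_ok_def by blast
      moreover have "fst b1 \<noteq> {}" using assms(1) b unfolding blocks_ok_def by blast
      ultimately show False using b(3) by simp
    qed
  qed
  have "fst ` Bs \<subseteq> Pow (fst G)" using assms(1) unfolding blocks_ok_def by blast
  then have "finite (fst ` Bs)" using assms(2) finite_subset by blast
  then show ?thesis using finite_imageD inj by blast
qed

theorem mainTheorem2:
  fixes T :: nat and to :: "('s \<times> 's) set"
    and \<Lambda> :: "('v, 'm, 's) library set" and L :: "('v, 'm, 's) library"
    and I :: "('v, 'm) impl"
  assumes libs: "\<forall>Lb\<in>insert L \<Lambda>. is_library T to Lb"
    and pc: "pairwise_compatible \<Lambda>"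
    and notin: "L \<notin> \<Lambda>"
    and compat: "\<forall>Lb\<in>\<Lambda>. compatible L Lb"
    and wd: "well_defined T I L \<Lambda>"
    and ls: "locally_sound T to I L \<Lambda>"
  shows "\<forall>ps. length ps = T \<and>
              (\<forall>p\<in>set ps. seqprog p \<and> calls_in (\<Union>(lM ` insert L \<Lambda>)) p) \<and>
              loc_impl T (insert L \<Lambda>) I L \<inter> loc_prog (insert L \<Lambda>) ps = {}
           \<longrightarrow> outcome T to \<Lambda> (transl_conc I L ps) \<subseteq> outcome T to (insert L \<Lambda>) ps"
proof (intro allI impI subsetI)
  fix ps vs
  assume h: "length ps = T \<and>
              (\<forall>p\<in>set ps. seqprog p \<and> calls_in (\<Union>(lM ` insert L \<Lambda>)) p) \<and>
              loc_impl T (insert L \<Lambda>) I L \<inter> loc_prog (insert L \<Lambda>) ps = {}"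
    and v: "vs \<in> outcome T to \<Lambda> (transl_conc I L ps)"
  have len: "length ps = T" and locdisj: "loc_impl T (insert L \<Lambda>) I L \<inter> loc_prog (insert L \<Lambda>) ps = {}"
    using h by blast+
  from v obtain X where cons: "consistent T to \<Lambda> X" and sc: "(vs, (ev X, po X)) \<in> sem_conc (transl_conc I L ps)"
    unfolding outcome_def by blast
  have lt: "length (transl_conc I L ps) = T" using len unfolding transl_conc_def by simp
  have nt: "\<And>i. i < T \<Longrightarrow> transl_conc I L ps ! i = transl I L (Suc i) (ps ! i)"
    using len unfolding transl_conc_def by simp
  from sc obtain vs' Gs where G0: "(vs, (ev X, po X)) = (vs', (\<Union>i<length (transl_conc I L ps). fst (Gs ! i)),
        (\<Union>i<length (transl_conc I L ps). snd (Gs ! i)))"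
    "length vs' = length (transl_conc I L ps)" "length Gs = length (transl_conc I L ps)"
    "\<forall>i<length (transl_conc I L ps). ((vs' ! i, 0), Gs ! i) \<in> sem (Suc i) (transl_conc I L ps ! i)"
    unfolding sem_conc_def mem_Collect_eq by (elim exE conjE) (rule that)
  have G: "length vs = T" "length Gs = T"
    "\<forall>i<T. ((vs ! i, 0), Gs ! i) \<in> sem (Suc i) (transl_conc I L ps ! i)"
    "ev X = (\<Union>i<T. fst (Gs ! i))" "po X = (\<Union>i<T. snd (Gs ! i))"
    using G0 unfolding lt prod.inject by simp_all
  have semG: "\<forall>i<T. ((vs ! i, 0), Gs ! i) \<in> sem (Suc i) (transl I L (Suc i) (ps ! i))"
    using G(3) nt by simp
  have "\<forall>i. \<exists>Bs. i < T \<longrightarrow> blocks_ok (Suc i) I L (Gs!i) Bs \<and>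
         (\<forall>f. fok (Suc i) (Gs!i) Bs f \<longrightarrow> ((vs!i, 0), absG f (Gs!i)) \<in> sem (Suc i) (ps!i) \<and> conv f (Gs!i))"
  proof
    fix i
    show "\<exists>Bs. i < T \<longrightarrow> blocks_ok (Suc i) I L (Gs!i) Bs \<and>
         (\<forall>f. fok (Suc i) (Gs!i) Bs f \<longrightarrow> ((vs!i, 0), absG f (Gs!i)) \<in> sem (Suc i) (ps!i) \<and> conv f (Gs!i))"
    proof (cases "i < T")
      case True
      then have "Suc i \<in> {1..T}" by simp
      then show ?thesis using main_ind[OF wd, of "Suc i"] semG True by blast
    qed simp
  qed
  then obtain BB where BB: "\<forall>i<T. blocks_ok (Suc i) I L (Gs!i) (BB i) \<and>
         (\<forall>f. fok (Suc i) (Gs!i) (BB i) f \<longrightarrow> ((vs!i, 0), absG f (Gs!i)) \<in> sem (Suc i) (ps!i) \<and> conv f (Gs!i))"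
    by metis
  have fin: "finite (\<Union>i<T. BB i)"
  proof (rule finite_UN_I)
    show "finite {..<T}" by simp
    fix i assume "i \<in> {..<T}"
    then have i: "i < T" by simp
    have "((vs ! i, 0), Gs ! i) \<in> sem (Suc i) (transl I L (Suc i) (ps ! i))" using semG i by blast
    then have "wfG (Suc i) (Gs!i)" by (rule sem_wfG)
    then have "finite (fst (Gs ! i))" unfolding wfG_def by blast
    then show "finite (BB i)" using blocks_finite[OF conjunct1[OF BB[rule_format, OF i]]] by blast
  qed
  have "\<exists>(\<nu>::(('v,'m) event set \<times> ('v,'m) lab) \<Rightarrow> nat). inj_on \<nu> (\<Union>i<T. BB i)"
    using finite_imp_inj_to_nat_seg[OF fin] by (elim exE conjE) (rule exI)
  then obtain \<nu> :: "(('v,'m) event set \<times> ('v,'m) lab) \<Rightarrow> nat" where nu: "inj_on \<nu> (\<Union>i<T. BB i)"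
    by (elim exE)
  interpret c: ctx T to \<Lambda> L I ps vs X Gs BB \<nu>
    by (unfold_locales; (fact libs notin compat wd ls len locdisj cons semG BB nu G(1) G(2) G(4) G(5))?)
  obtain stmp' so' g where H: "c.LSP stmp' so' g" using c.LSP_ex by blast
  interpret c2: ctx2 T to \<Lambda> L I ps vs X Gs BB \<nu> stmp' so' g
    by unfold_locales (fact H)
  show "vs \<in> outcome T to (insert L \<Lambda>) ps" by (rule c2.outc)
qed


end
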